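(* Let $\eta$ be a stationary hyperuniform point process on $\mathbb{R}$ (unit intensity) with truncated pair correlation measure $\beta$ satisfying $|\beta|(\mathbb{R})<\infty$. Let $F(x)=\beta([x,\infty))$ and $G(y)=-\int_0^yF(x)\,\mathrm{d}x$. Then $G(y)=\frac12\operatorname{Var}(\eta(\Lambda_y))$ for all $y>0$. Consider the statements: (i) $G$ is regularly varying with some parameter $a\in[0,1]$, i.e. $\lim_{n\to\infty}G(xn)/G(n)=x^a$ for all $x>0$; (ii) for all $z\in\mathbb{R}$ the limit $\mathrm{cov}(z)$ exists and equals $\mathrm{cov}(z)=\frac{|z-1|^a}{2}+\frac{|z+1|^a}{2}-|z|^a$ if $a\in(0,1]$, while for $a=0$ one has $\mathrm{cov}(0)=1$, $\mathrm{cov}(1)=\mathrm{cov}(-1)=-\frac12$ and $\mathrm{cov}(z)=0$ for $z\notin\{-1,0,1\}$; (iii) the limits $\mathrm{cov}(1)$ and $\mathrm{cov}(2)$ exist and are finite. Then (i) implies (ii) (with the same $a$). If in addition $F(x)\le 0$ for all sufficiently large $x$ (or $F(x)\ge0$ for all sufficiently large $x$), then (i), (ii) and (iii) are all equivalent (with (iii) implying (i) for some $a\in[0,1]$). In each of these cases $\mathrm{cov}(1)=2^{a-1}-1$.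
   Context: A point process on $\mathbb{R}$ is a random simple locally finite counting measure; stationary means shift-invariant in law; unit intensity means $\mathbb{E}[\eta(W)]=\lambda_1(W)$. With $\alpha^2$ the second factorial moment measure $\alpha^2(W)=\mathbb{E}[\sum_{n_1\ne n_2}\mathbf 1_{(X_{n_1},X_{n_2})\in W}]$ for $\eta=\sum_n\delta_{X_n}$, the reduced measure $\alpha^2_!$ is defined by $\int f\,\mathrm{d}\alpha^2=\iint f(x+y,y)\,\alpha^2_!(\mathrm{d}x)\,\mathrm{d}y$ for measurable $f\ge0$, and the truncated pair correlation measure is the signed measure $\beta=\alpha^2_!-\lambda_1$; it is symmetric under $x\mapsto -x$. $\Lambda_n(z)=[z,z+n]$, $\Lambda_n=[0,n]$. Hyperuniform: $\operatorname{Var}(\eta(\Lambda_n))/n\to0$; under $|\beta|(\mathbb{R})<\infty$ this is equivalent to $\beta(\mathbb{R})=-1$. $\mathrm{cov}(z)=\lim_{n\to\infty}\operatorname{Cov}(\eta(\Lambda_n),\eta(\Lambda_n(nz)))/\operatorname{Var}(\eta(\Lambda_n))$. *)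

theory Defs
  imports "HOL-Probability.Probability"
begin

text \<open>A simple point process on the real line is modelled as a random locally finite
  set of points X :: 'w => real set (its support); the counting measure is
  eta(W) = #(X w \<inter> W).\<close>

definition cnt :: "('w \<Rightarrow> real set) \<Rightarrow> 'w \<Rightarrow> real set \<Rightarrow> real" where
  "cnt X w W = real (card (X w \<inter> W))"

definition ecnt :: "('w \<Rightarrow> real set) \<Rightarrow> 'w \<Rightarrow> real set \<Rightarrow> ennreal" where
  "ecnt X w W = emeasure (count_space UNIV) (X w \<inter> W)"

definition point_process :: "'w measure \<Rightarrow> ('w \<Rightarrow> real set) \<Rightarrow> bool" where
  "point_process M X \<longleftrightarrow> prob_space M \<and>
     (\<forall>w\<in>space M. \<forall>B. bounded B \<longrightarrow> finite (X w \<inter> B)) \<and>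
     (\<forall>B\<in>sets borel. bounded B \<longrightarrow>
        (\<lambda>w. card (X w \<inter> B)) \<in> measurable M (count_space UNIV))"

definition stationary_pp :: "'w measure \<Rightarrow> ('w \<Rightarrow> real set) \<Rightarrow> bool" where
  "stationary_pp M X \<longleftrightarrow>
     (\<forall>t::real. \<forall>n::nat. \<forall>Ws :: nat \<Rightarrow> real set.
        (\<forall>i<n. Ws i \<in> sets borel \<and> bounded (Ws i)) \<longrightarrow>
        distr M (PiM {..<n} (\<lambda>_. count_space (UNIV :: nat set)))
             (\<lambda>w. \<lambda>i\<in>{..<n}. card (X w \<inter> ((+) t) ` Ws i))
      = distr M (PiM {..<n} (\<lambda>_. count_space (UNIV :: nat set)))
             (\<lambda>w. \<lambda>i\<in>{..<n}. card (X w \<inter> Ws i)))"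

definition unit_intensity :: "'w measure \<Rightarrow> ('w \<Rightarrow> real set) \<Rightarrow> bool" where
  "unit_intensity M X \<longleftrightarrow>
     (\<forall>W\<in>sets borel. (\<integral>\<^sup>+ w. ecnt X w W \<partial>M) = emeasure lborel W)"

definition pairs2 :: "('w \<Rightarrow> real set) \<Rightarrow> 'w \<Rightarrow> (real \<times> real) set" where
  "pairs2 X w = {(x, y). x \<in> X w \<and> y \<in> X w \<and> x \<noteq> y}"

text \<open>A is the reduced second factorial moment measure: for measurable f \<ge> 0,
  integral f d(alpha^2) = E[sum over n1 \<noteq> n2 of f(X_n1, X_n2)] equals the iterated
  integral of f(x+y,y) against A(dx) dy.\<close>
definition reduced_second_moment ::
    "'w measure \<Rightarrow> ('w \<Rightarrow> real set) \<Rightarrow> real measure \<Rightarrow> bool" where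
  "reduced_second_moment M X A \<longleftrightarrow> sets A = sets borel \<and>
     (\<forall>f \<in> borel_measurable (borel \<Otimes>\<^sub>M borel).
        (\<integral>\<^sup>+ w. (\<integral>\<^sup>+ p. f p \<partial>count_space (pairs2 X w)) \<partial>M)
        = (\<integral>\<^sup>+ y. (\<integral>\<^sup>+ x. f (x + y, y) \<partial>A) \<partial>lborel))"

text \<open>The truncated pair correlation
  measure beta = A - lebesgue with finite total variation is represented by a pair of
  finite Borel measures Bp, Bn with A + Bn = lebesgue + Bp, so beta = Bp - Bn.
  (Such a pair exists iff |beta|(R) < \<infinity>, e.g. via the Jordan decomposition.)\<close>
definition finite_tpc_decomp :: "real measure \<Rightarrow> real measure \<Rightarrow> real measure \<Rightarrow> bool" where
  "finite_tpc_decomp A Bp Bn \<longleftrightarrow>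
     finite_measure Bp \<and> finite_measure Bn \<and>
     sets Bp = sets borel \<and> sets Bn = sets borel \<and>
     (\<forall>B\<in>sets borel. emeasure A B + emeasure Bn B = emeasure lborel B + emeasure Bp B)"

definition beta_of :: "real measure \<Rightarrow> real measure \<Rightarrow> real set \<Rightarrow> real" where
  "beta_of Bp Bn B = measure Bp B - measure Bn B"

definition Fb :: "real measure \<Rightarrow> real measure \<Rightarrow> real \<Rightarrow> real" where
  "Fb Bp Bn x = beta_of Bp Bn {x..}"

definition Gb :: "real measure \<Rightarrow> real measure \<Rightarrow> real \<Rightarrow> real" where
  "Gb Bp Bn y = - integral {0..y} (Fb Bp Bn)"

definition var_cnt :: "'w measure \<Rightarrow> ('w \<Rightarrow> real set) \<Rightarrow> real set \<Rightarrow> real" where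
  "var_cnt M X W = prob_space.variance M (\<lambda>w. cnt X w W)"

definition cov_cnt :: "'w measure \<Rightarrow> ('w \<Rightarrow> real set) \<Rightarrow> real set \<Rightarrow> real set \<Rightarrow> real" where
  "cov_cnt M X V W = prob_space.expectation M
     (\<lambda>w. (cnt X w V - prob_space.expectation M (\<lambda>v. cnt X v V)) *
          (cnt X w W - prob_space.expectation M (\<lambda>v. cnt X v W)))"

definition Lam :: "real \<Rightarrow> real \<Rightarrow> real set" where
  "Lam n z = {z..z+n}"

definition hyperuniform :: "'w measure \<Rightarrow> ('w \<Rightarrow> real set) \<Rightarrow> bool" where
  "hyperuniform M X \<longleftrightarrow> ((\<lambda>n. var_cnt M X (Lam n 0) / n) \<longlongrightarrow> 0) at_top"

text \<open>The ratio whose limit (n \<rightarrow> \<infinity>) is cov(z).\<close>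
definition cov_ratio :: "'w measure \<Rightarrow> ('w \<Rightarrow> real set) \<Rightarrow> real \<Rightarrow> real \<Rightarrow> real" where
  "cov_ratio M X z n = cov_cnt M X (Lam n 0) (Lam n (n * z)) / var_cnt M X (Lam n 0)"

definition regularly_varying :: "(real \<Rightarrow> real) \<Rightarrow> real \<Rightarrow> bool" where
  "regularly_varying G a \<longleftrightarrow>
     (\<forall>x>0. ((\<lambda>n. G (x * n) / G n) \<longlongrightarrow> x powr a) at_top)"

definition cov_target :: "real \<Rightarrow> real \<Rightarrow> real" where
  "cov_target a z =
     (if 0 < a then \<bar>z - 1\<bar> powr a / 2 + \<bar>z + 1\<bar> powr a / 2 - \<bar>z\<bar> powr a
      else if z = 0 then 1 else if z = 1 \<or> z = -1 then -1/2 else 0)"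

end

theory Submission
  imports Defs "HOL-Analysis.Kronecker_Approximation_Theorem"
begin

locale PPs =
  fixes M :: "'w measure" and X :: "'w \<Rightarrow> real set" and A Bp Bn :: "real measure"
  assumes pp: "point_process M X" and unit: "unit_intensity M X"
    and red: "reduced_second_moment M X A" and beta: "finite_tpc_decomp A Bp Bn"
begin

lemma prob: "prob_space M" using pp unfolding point_process_def by auto

sublocale prob_space M by (rule prob)

lemma finX: "w \<in> space M \<Longrightarrow> bounded B \<Longrightarrow> finite (X w \<inter> B)"
  using pp unfolding point_process_def by auto

lemma meas_card: "B \<in> sets borel \<Longrightarrow> bounded B \<Longrightarrow> (\<lambda>w. card (X w \<inter> B)) \<in> measurable M (count_space UNIV)"
  using pp unfolding point_process_def by auto

lemma meas_cnt: "B \<in> sets borel \<Longrightarrow> bounded B \<Longrightarrow> (\<lambda>w. cnt X w B) \<in> borel_measurable M"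
  unfolding cnt_def
  by (rule measurable_compose[OF meas_card]) auto

lemma Bp_fin: "finite_measure Bp" and Bn_fin: "finite_measure Bn"
  and sBp: "sets Bp = sets borel" and sBn: "sets Bn = sets borel"
  and Aeq: "\<And>B. B \<in> sets borel \<Longrightarrow> emeasure A B + emeasure Bn B = emeasure lborel B + emeasure Bp B"
  using beta unfolding finite_tpc_decomp_def by auto

lemma sA: "sets A = sets borel" using red unfolding reduced_second_moment_def by auto

lemma nn_cnt: "B \<in> sets borel \<Longrightarrow> (\<integral>\<^sup>+ w. ennreal (cnt X w B) \<partial>M) = emeasure lborel B"
  if "bounded B"
proof -
  assume B: "B \<in> sets borel"
  have "(\<integral>\<^sup>+ w. ennreal (cnt X w B) \<partial>M) = (\<integral>\<^sup>+ w. ecnt X w B \<partial>M)"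
    by (rule nn_integral_cong) (simp add: cnt_def ecnt_def finX[OF _ that] ennreal_of_nat_eq_real_of_nat)
  also have "\<dots> = emeasure lborel B" using unit B unfolding unit_intensity_def by auto
  finally show ?thesis .
qed

lemma bounded_fin_lborel: "bounded B \<Longrightarrow> emeasure lborel B < \<infinity>"
proof -
  assume "bounded B"
  then obtain a where "B \<subseteq> cbox (-a) a" using bounded_subset_cbox_symmetric by blast
  then have "emeasure lborel B \<le> emeasure lborel (cbox (-a) a)" by (intro emeasure_mono) auto
  also have "\<dots> < \<infinity>" by (rule emeasure_lborel_cbox_finite)
  finally show ?thesis .
qed

end

lemma shift_set_borel: assumes [measurable]: "B \<in> sets borel" shows "{x::real. x + y \<in> B} \<in> sets borel"
  by measurable

lemma pair_set_borel: assumes [measurable]: "B \<in> sets borel" "C \<in> sets borel" shows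
   "{(x, y::real). x + y \<in> B \<and> y \<in> C} \<in> sets (borel \<Otimes>\<^sub>M borel)"
proof -
  have f: "(\<lambda>p::real\<times>real. fst p + snd p) \<in> borel_measurable (borel \<Otimes>\<^sub>M borel)"
    by measurable
  have g: "(\<lambda>p::real\<times>real. snd p) \<in> borel_measurable (borel \<Otimes>\<^sub>M borel)"
    by measurable
  have "(\<lambda>p::real\<times>real. fst p + snd p) -` B \<inter> space (borel \<Otimes>\<^sub>M borel) \<in> sets (borel \<Otimes>\<^sub>M borel)"
    using measurable_sets[OF f assms(1)] .
  moreover have "(\<lambda>p::real\<times>real. snd p) -` C \<inter> space (borel \<Otimes>\<^sub>M borel) \<in> sets (borel \<Otimes>\<^sub>M borel)"
    using measurable_sets[OF g assms(2)] .
  ultimately have "((\<lambda>p::real\<times>real. fst p + snd p) -` B \<inter> space (borel \<Otimes>\<^sub>M borel)) \<inter>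
     ((\<lambda>p::real\<times>real. snd p) -` C \<inter> space (borel \<Otimes>\<^sub>M borel)) \<in> sets (borel \<Otimes>\<^sub>M borel)"
    by (rule sets.Int)
  moreover have "((\<lambda>p::real\<times>real. fst p + snd p) -` B \<inter> space (borel \<Otimes>\<^sub>M borel)) \<inter>
     ((\<lambda>p::real\<times>real. snd p) -` C \<inter> space (borel \<Otimes>\<^sub>M borel)) = {p::real\<times>real. fst p + snd p \<in> B \<and> snd p \<in> C}"
    by (auto simp: space_pair_measure)
  ultimately have "{p::real\<times>real. fst p + snd p \<in> B \<and> snd p \<in> C} \<in> sets (borel \<Otimes>\<^sub>M borel)"
    by simp
  moreover have "{(x, y::real). x + y \<in> B \<and> y \<in> C} = {p::real\<times>real. fst p + snd p \<in> B \<and> snd p \<in> C}"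
    by auto
  ultimately show ?thesis by simp
qed

lemma tonelli_shift:
  fixes Q :: "real measure"
  assumes Q: "finite_measure Q" "sets Q = sets borel" and B: "B \<in> sets borel" and C: "C \<in> sets borel"
  shows "(\<integral>\<^sup>+ y. indicator C y * emeasure Q {x. x + y \<in> B} \<partial>lborel)
       = (\<integral>\<^sup>+ x. emeasure lborel {y\<in>C. x + y \<in> B} \<partial>Q)"
proof -
  interpret Q: finite_measure Q by fact
  interpret pair_sigma_finite Q lborel
    by (simp add: Q.sigma_finite_measure_axioms lborel.sigma_finite_measure_axioms pair_sigma_finite.intro)
  let ?f = "\<lambda>x y. indicator {(x,y). x + y \<in> B \<and> y \<in> C} (x, y) :: ennreal"
  have m: "(\<lambda>(x, y). ?f x y) \<in> borel_measurable (Q \<Otimes>\<^sub>M lborel)"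
  proof -
    have "{(x,y). x + y \<in> B \<and> y \<in> C} \<in> sets (borel \<Otimes>\<^sub>M borel)" using B C by (rule pair_set_borel)
    then have "{(x,y). x + y \<in> B \<and> y \<in> C} \<in> sets (Q \<Otimes>\<^sub>M lborel)"
      unfolding sets_pair_measure_cong[OF Q(2) sets_lborel] .
    then show ?thesis by (auto intro: borel_measurable_indicator)
  qed
  have F: "(\<integral>\<^sup>+ y. \<integral>\<^sup>+ x. ?f x y \<partial>Q \<partial>lborel) = (\<integral>\<^sup>+ x. \<integral>\<^sup>+ y. ?f x y \<partial>lborel \<partial>Q)"
    by (rule Fubini'[OF m])
  have I1: "(\<integral>\<^sup>+ x. ?f x y \<partial>Q) = indicator C y * emeasure Q {x. x + y \<in> B}" for y
  proof -
    have "(\<integral>\<^sup>+ x. ?f x y \<partial>Q) = (\<integral>\<^sup>+ x. indicator C y * indicator {x. x + y \<in> B} x \<partial>Q)"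
      by (intro nn_integral_cong) (auto simp: indicator_def)
    also have "\<dots> = indicator C y * emeasure Q {x. x + y \<in> B}"
      using B Q(2) by (intro nn_integral_cmult_indicator) auto
    finally show ?thesis .
  qed
  have I2: "(\<integral>\<^sup>+ y. ?f x y \<partial>lborel) = emeasure lborel {y\<in>C. x + y \<in> B}" for x
  proof -
    have "(\<integral>\<^sup>+ y. ?f x y \<partial>lborel) = (\<integral>\<^sup>+ y. indicator {y\<in>C. x + y \<in> B} y \<partial>lborel)"
      by (intro nn_integral_cong) (auto simp: indicator_def)
    also have "\<dots> = emeasure lborel {y\<in>C. x + y \<in> B}"
      proof (intro nn_integral_indicator)
      have "{y\<in>C. x + y \<in> B} = C \<inter> {y. y + x \<in> B}" by (auto simp: add.commute)
      then show "{y\<in>C. x + y \<in> B} \<in> sets lborel" using B C shift_set_borel[of B x] by auto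
    qed
    finally show ?thesis .
  qed
  show ?thesis using F by (simp only: I1 I2)
qed


lemma shift_meas:
  fixes Q :: "real measure"
  assumes Q: "finite_measure Q" "sets Q = sets borel" and B: "B \<in> sets borel" and C: "C \<in> sets borel"
  shows "(\<lambda>y. measure Q {x. x + y \<in> B}) \<in> borel_measurable borel"
    and "(\<lambda>x. measure lborel {y\<in>C. x + y \<in> B}) \<in> borel_measurable borel"
proof -
  interpret Q: finite_measure Q by fact
  have S1: "{(y, x). x + y \<in> B \<and> x \<in> UNIV} \<in> sets (borel \<Otimes>\<^sub>M borel)"
  proof -
    have "{(x, y::real). x + y \<in> B \<and> y \<in> UNIV} \<in> sets (borel \<Otimes>\<^sub>M borel)"
      using pair_set_borel[OF B, of UNIV] by simp
    moreover have "{(y, x). x + y \<in> B \<and> x \<in> UNIV} = {(x, y::real). x + y \<in> B \<and> y \<in> UNIV}"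
      by (auto simp: add.commute)
    ultimately show ?thesis by simp
  qed
  have "(\<lambda>p. indicator {(y, x). x + y \<in> B \<and> x \<in> UNIV} p :: ennreal) \<in> borel_measurable (borel \<Otimes>\<^sub>M Q)"
  proof (rule borel_measurable_indicator)
    show "{(y, x). x + y \<in> B \<and> x \<in> UNIV} \<in> sets (borel \<Otimes>\<^sub>M Q)"
      using S1 unfolding sets_pair_measure_cong[OF refl Q(2)] .
  qed
  then have "(\<lambda>y. \<integral>\<^sup>+ x. indicator {(y, x). x + y \<in> B \<and> x \<in> UNIV} (y, x) \<partial>Q) \<in> borel_measurable borel"
    by (rule Q.borel_measurable_nn_integral_fst)
  moreover have "(\<integral>\<^sup>+ x. indicator {(y, x). x + y \<in> B \<and> x \<in> UNIV} (y, x) \<partial>Q) = emeasure Q {x. x + y \<in> B}" for y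
  proof -
    have "(\<integral>\<^sup>+ x. indicator {(y, x). x + y \<in> B \<and> x \<in> UNIV} (y, x) \<partial>Q) = (\<integral>\<^sup>+ x. indicator {x. x + y \<in> B} x \<partial>Q)"
      by (intro nn_integral_cong) (auto simp: indicator_def)
    also have "\<dots> = emeasure Q {x. x + y \<in> B}"
      using shift_set_borel[OF B] Q(2) by (intro nn_integral_indicator) auto
    finally show ?thesis .
  qed
  ultimately have "(\<lambda>y. emeasure Q {x. x + y \<in> B}) \<in> borel_measurable borel" by simp
  then show "(\<lambda>y. measure Q {x. x + y \<in> B}) \<in> borel_measurable borel"
    unfolding measure_def by (rule borel_measurable_enn2real)
  have "(\<lambda>p. indicator {(x, y). x + y \<in> B \<and> y \<in> C} p :: ennreal) \<in> borel_measurable (borel \<Otimes>\<^sub>M lborel)"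
  proof (rule borel_measurable_indicator)
    show "{(x, y). x + y \<in> B \<and> y \<in> C} \<in> sets (borel \<Otimes>\<^sub>M lborel)"
      using pair_set_borel[OF B C] unfolding sets_pair_measure_cong[OF refl sets_lborel] .
  qed
  then have "(\<lambda>x. \<integral>\<^sup>+ y. indicator {(x, y). x + y \<in> B \<and> y \<in> C} (x, y) \<partial>lborel) \<in> borel_measurable borel"
    by (rule lborel.borel_measurable_nn_integral_fst)
  moreover have "(\<integral>\<^sup>+ y. indicator {(x, y). x + y \<in> B \<and> y \<in> C} (x, y) \<partial>lborel) = emeasure lborel {y\<in>C. x + y \<in> B}" for x
  proof -
    have "(\<integral>\<^sup>+ y. indicator {(x, y). x + y \<in> B \<and> y \<in> C} (x, y) \<partial>lborel) = (\<integral>\<^sup>+ y. indicator {y\<in>C. x + y \<in> B} y \<partial>lborel)"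
      by (intro nn_integral_cong) (auto simp: indicator_def)
    also have "\<dots> = emeasure lborel {y\<in>C. x + y \<in> B}"
    proof (intro nn_integral_indicator)
      have "{y\<in>C. x + y \<in> B} = C \<inter> {y. y + x \<in> B}" by (auto simp: add.commute)
      then show "{y\<in>C. x + y \<in> B} \<in> sets lborel" using B C shift_set_borel[of B x] by auto
    qed
    finally show ?thesis .
  qed
  ultimately have "(\<lambda>x. emeasure lborel {y\<in>C. x + y \<in> B}) \<in> borel_measurable borel" by simp
  then show "(\<lambda>x. measure lborel {y\<in>C. x + y \<in> B}) \<in> borel_measurable borel"
    unfolding measure_def by (rule borel_measurable_enn2real)
qed


definition Ib :: "real measure \<Rightarrow> real measure \<Rightarrow> (real \<Rightarrow> real) \<Rightarrow> real" where
  "Ib P N f = (\<integral>x. f x \<partial>P) - (\<integral>x. f x \<partial>N)"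

definition ov :: "real set \<Rightarrow> real set \<Rightarrow> real \<Rightarrow> real" where
  "ov B C x = measure lborel {y\<in>C. x + y \<in> B}"

lemma fmeas_bounded: "B \<in> sets borel \<Longrightarrow> bounded B \<Longrightarrow> B \<in> fmeasurable lborel"
proof -
  assume "B \<in> sets borel" "bounded B"
  then obtain a where "B \<subseteq> cbox (-a) a" using bounded_subset_cbox_symmetric by blast
  then have "emeasure lborel B \<le> emeasure lborel (cbox (-a) a)" by (intro emeasure_mono) auto
  also have "\<dots> < \<infinity>" by (rule emeasure_lborel_cbox_finite)
  finally show ?thesis using \<open>B \<in> sets borel\<close> unfolding fmeasurable_def by simp
qed

lemma ov_le: "C \<in> sets borel \<Longrightarrow> bounded C \<Longrightarrow> B \<in> sets borel \<Longrightarrow> ov B C x \<le> measure lborel C"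
  unfolding ov_def
proof (rule measure_mono_fmeasurable)
  assume C: "C \<in> sets borel" "bounded C" and B: "B \<in> sets borel"
  have "{y\<in>C. x + y \<in> B} = C \<inter> {y. y + x \<in> B}" by (auto simp: add.commute)
  then show "{y\<in>C. x + y \<in> B} \<in> sets lborel" using B C shift_set_borel[of B x] by auto
  show "C \<in> fmeasurable lborel" using fmeas_bounded C by blast
  show "{y\<in>C. x + y \<in> B} \<subseteq> C" by blast
qed

lemma ov_nonneg: "0 \<le> ov B C x" unfolding ov_def by (rule measure_nonneg)

lemma ov_integrable:
  assumes Q: "finite_measure Q" "sets Q = sets borel" and B: "B \<in> sets borel" and C: "C \<in> sets borel" "bounded C"
  shows "integrable Q (ov B C)"
proof -
  interpret Q: finite_measure Q by fact
  show ?thesis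
  proof (rule Q.integrable_const_bound[where B="measure lborel C"])
    show "AE x in Q. norm (ov B C x) \<le> measure lborel C" using ov_le[OF C B] ov_nonneg by auto
    show "ov B C \<in> borel_measurable Q"
      unfolding measurable_cong_sets[OF Q(2) refl] ov_def using shift_meas(2)[OF Q B C(1)] .
  qed
qed

lemma tonelli_real:
  fixes Q :: "real measure"
  assumes Q: "finite_measure Q" "sets Q = sets borel" and B: "B \<in> sets borel" and C: "C \<in> sets borel" "bounded C"
  shows "(\<integral>\<^sup>+ y. ennreal (indicator C y * measure Q {x. x + y \<in> B}) \<partial>lborel) = ennreal (\<integral>x. ov B C x \<partial>Q)"
proof -
  interpret Q: finite_measure Q by fact
  have "(\<integral>\<^sup>+ y. ennreal (indicator C y * measure Q {x. x + y \<in> B}) \<partial>lborel)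
     = (\<integral>\<^sup>+ y. indicator C y * emeasure Q {x. x + y \<in> B} \<partial>lborel)"
    by (intro nn_integral_cong) (auto simp: indicator_def Q.emeasure_eq_measure)
  also have "\<dots> = (\<integral>\<^sup>+ x. emeasure lborel {y\<in>C. x + y \<in> B} \<partial>Q)"
    by (rule tonelli_shift[OF Q B C(1)])
  also have "\<dots> = (\<integral>\<^sup>+ x. ennreal (ov B C x) \<partial>Q)"
  proof (intro nn_integral_cong)
    fix x
    have "{y\<in>C. x + y \<in> B} \<in> fmeasurable lborel"
    proof (rule fmeasurableI2[OF fmeas_bounded[OF C]])
      have "{y\<in>C. x + y \<in> B} = C \<inter> {y. y + x \<in> B}" by (auto simp: add.commute)
      then show "{y\<in>C. x + y \<in> B} \<in> sets lborel" using B C shift_set_borel[of B x] by auto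
    qed auto
    then show "emeasure lborel {y\<in>C. x + y \<in> B} = ennreal (ov B C x)"
      unfolding ov_def by (simp add: emeasure_eq_measure2)
  qed
  also have "\<dots> = ennreal (\<integral>x. ov B C x \<partial>Q)"
    by (rule nn_integral_eq_integral[OF ov_integrable[OF Q B C]]) (auto simp: ov_nonneg)
  finally show ?thesis .
qed


context PPs begin

lemma lborel_shift: "B \<in> sets borel \<Longrightarrow> emeasure lborel {x. x + y \<in> B} = emeasure lborel (B::real set)"
proof -
  assume B: "B \<in> sets borel"
  have "emeasure lborel B = emeasure (distr lborel borel ((+) y)) B"
    by (simp only: lborel_distr_plus)
  also have "\<dots> = emeasure lborel ((+) y -` B \<inter> space lborel)"
    by (rule emeasure_distr) (use B in auto)
  also have "(+) y -` B \<inter> space lborel = {x. x + y \<in> B}" by (auto simp: add.commute)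
  finally show ?thesis by simp
qed

lemma A_shift:
  assumes B: "B \<in> sets borel" "bounded B"
  shows "emeasure A {x. x + y \<in> B}
     = ennreal (measure lborel B + measure Bp {x. x + y \<in> B} - measure Bn {x. x + y \<in> B})"
    and "0 \<le> measure lborel B + measure Bp {x. x + y \<in> B} - measure Bn {x. x + y \<in> B}"
proof -
  interpret P: finite_measure Bp by (rule Bp_fin)
  interpret N: finite_measure Bn by (rule Bn_fin)
  define S where "S = {x. x + y \<in> B}"
  have S: "S \<in> sets borel" unfolding S_def by (rule shift_set_borel[OF B(1)])
  have e: "emeasure A S + emeasure Bn S = emeasure lborel S + emeasure Bp S" by (rule Aeq[OF S])
  have l: "emeasure lborel S = ennreal (measure lborel B)"
    unfolding S_def lborel_shift[OF B(1)]
    using bounded_fin_lborel[OF B(2)] by (simp add: emeasure_eq_ennreal_measure)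
  have "emeasure A S + ennreal (measure Bn S) = ennreal (measure lborel B + measure Bp S)"
    using e l by (simp add: P.emeasure_eq_measure N.emeasure_eq_measure ennreal_plus)
  moreover have "emeasure A S \<noteq> \<top>"
  proof -
    have "emeasure A S \<le> emeasure A S + ennreal (measure Bn S)" by simp
    also have "\<dots> = ennreal (measure lborel B + measure Bp S)"
      by fact
    also have "\<dots> < \<top>" by simp
    finally show ?thesis by simp
  qed
  then obtain a where a: "emeasure A S = ennreal a" "0 \<le> a" by (cases "emeasure A S") auto
  ultimately have "ennreal (a + measure Bn S) = ennreal (measure lborel B + measure Bp S)"
    by (simp add: ennreal_plus)
  then have "a + measure Bn S = measure lborel B + measure Bp S"
    using a(2) by (subst (asm) ennreal_inj) auto
  then have "a = measure lborel B + measure Bp S - measure Bn S" by simp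
  then show "emeasure A {x. x + y \<in> B}
     = ennreal (measure lborel B + measure Bp {x. x + y \<in> B} - measure Bn {x. x + y \<in> B})"
    and "0 \<le> measure lborel B + measure Bp {x. x + y \<in> B} - measure Bn {x. x + y \<in> B}"
    using a unfolding S_def by auto
qed

lemma card_split:
  assumes w: "w \<in> space M" and B: "bounded B" and C: "bounded C"
  shows "card (X w \<inter> B) * card (X w \<inter> C) = card (X w \<inter> (B \<inter> C)) + card (pairs2 X w \<inter> (B \<times> C))"
proof -
  have fB: "finite (X w \<inter> B)" and fC: "finite (X w \<inter> C)" using finX[OF w] B C by auto
  have eq: "(X w \<inter> B) \<times> (X w \<inter> C) = (pairs2 X w \<inter> (B \<times> C)) \<union> (\<lambda>x. (x, x)) ` (X w \<inter> (B \<inter> C))"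
    unfolding pairs2_def by auto
  have d: "(pairs2 X w \<inter> (B \<times> C)) \<inter> (\<lambda>x. (x, x)) ` (X w \<inter> (B \<inter> C)) = {}"
    unfolding pairs2_def by auto
  have f1: "finite (pairs2 X w \<inter> (B \<times> C))"
    by (rule finite_subset[of _ "(X w \<inter> B) \<times> (X w \<inter> C)"]) (use fB fC in \<open>auto simp: pairs2_def\<close>)
  have f2: "finite ((\<lambda>x. (x, x)) ` (X w \<inter> (B \<inter> C)))"
    by (intro finite_imageI finite_subset[OF _ fB]) auto
  have "card (X w \<inter> B) * card (X w \<inter> C) = card ((X w \<inter> B) \<times> (X w \<inter> C))"
    by (simp add: card_cartesian_product)
  also have "\<dots> = card (pairs2 X w \<inter> (B \<times> C)) + card ((\<lambda>x. (x, x)) ` (X w \<inter> (B \<inter> C)))"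
    unfolding eq by (rule card_Un_disjoint[OF f1 f2 d])
  also have "card ((\<lambda>x. (x, x)) ` (X w \<inter> (B \<inter> C))) = card (X w \<inter> (B \<inter> C))"
    by (rule card_image) (auto simp: inj_on_def)
  finally show ?thesis by simp
qed

lemma pairs_int:
  assumes w: "w \<in> space M" and B: "bounded B" and C: "bounded C"
  shows "(\<integral>\<^sup>+ p. indicator (B \<times> C) p \<partial>count_space (pairs2 X w)) = of_nat (card (pairs2 X w \<inter> (B \<times> C)))"
proof -
  have fB: "finite (X w \<inter> B)" and fC: "finite (X w \<inter> C)" using finX[OF w] B C by auto
  have f1: "finite (pairs2 X w \<inter> (B \<times> C))"
    by (rule finite_subset[of _ "(X w \<inter> B) \<times> (X w \<inter> C)"]) (use fB fC in \<open>auto simp: pairs2_def\<close>)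
  have "(\<integral>\<^sup>+ p. indicator (B \<times> C) p \<partial>count_space (pairs2 X w))
      = (\<integral>\<^sup>+ p. indicator (pairs2 X w \<inter> (B \<times> C)) p \<partial>count_space (pairs2 X w))"
    by (intro nn_integral_cong) (auto simp: indicator_def)
  also have "\<dots> = emeasure (count_space (pairs2 X w)) (pairs2 X w \<inter> (B \<times> C))"
    by (rule nn_integral_indicator) auto
  also have "\<dots> = of_nat (card (pairs2 X w \<inter> (B \<times> C)))"
    using f1 by (intro emeasure_count_space_finite) auto
  finally show ?thesis .
qed

end

context PPs begin

lemma int_cnt:
  assumes B: "B \<in> sets borel" "bounded B"
  shows "integrable M (\<lambda>w. cnt X w B)" and "expectation (\<lambda>w. cnt X w B) = measure lborel B"
proof -
  have h: "has_bochner_integral M (\<lambda>w. cnt X w B) (measure lborel B)"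
  proof (rule has_bochner_integral_nn_integral)
    show "(\<lambda>w. cnt X w B) \<in> borel_measurable M" by (rule meas_cnt[OF B])
    show "AE x in M. 0 \<le> cnt X x B" by (simp add: cnt_def)
    show "0 \<le> measure lborel B" by (rule measure_nonneg)
    show "(\<integral>\<^sup>+ w. ennreal (cnt X w B) \<partial>M) = ennreal (measure lborel B)"
      using nn_cnt[OF B(2) B(1)] bounded_fin_lborel[OF B(2)] by (simp add: emeasure_eq_ennreal_measure)
  qed
  then show "integrable M (\<lambda>w. cnt X w B)" and "expectation (\<lambda>w. cnt X w B) = measure lborel B"
    by (auto simp: has_bochner_integral_iff)
qed

lemma second_nn:
  assumes B: "B \<in> sets borel" "bounded B" and C: "C \<in> sets borel" "bounded C"
  shows "(\<integral>\<^sup>+ w. ennreal (cnt X w B * cnt X w C) \<partial>M)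
     = emeasure lborel (B \<inter> C) + (\<integral>\<^sup>+ y. indicator C y * emeasure A {x. x + y \<in> B} \<partial>lborel)"
proof -
  have BC: "B \<inter> C \<in> sets borel" "bounded (B \<inter> C)" using B C by auto
  have mf: "(indicator (B \<times> C) :: real \<times> real \<Rightarrow> ennreal) \<in> borel_measurable (borel \<Otimes>\<^sub>M borel)"
    by (rule borel_measurable_indicator) (rule pair_measureI[OF B(1) C(1)])
  have r: "(\<integral>\<^sup>+ w. (\<integral>\<^sup>+ p. indicator (B \<times> C) p \<partial>count_space (pairs2 X w)) \<partial>M)
        = (\<integral>\<^sup>+ y. (\<integral>\<^sup>+ x. indicator (B \<times> C) (x + y, y) \<partial>A) \<partial>lborel)"
    using red mf unfolding reduced_second_moment_def by blast
  have inner: "(\<integral>\<^sup>+ x. indicator (B \<times> C) (x + y, y) \<partial>A) = indicator C y * emeasure A {x. x + y \<in> B}" for y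
  proof -
    have "(\<integral>\<^sup>+ x. indicator (B \<times> C) (x + y, y) \<partial>A) = (\<integral>\<^sup>+ x. indicator C y * indicator {x. x + y \<in> B} x \<partial>A)"
      by (intro nn_integral_cong) (auto simp: indicator_def)
    also have "\<dots> = indicator C y * emeasure A {x. x + y \<in> B}"
      using shift_set_borel[OF B(1), of y] sA by (intro nn_integral_cmult_indicator) auto
    finally show ?thesis .
  qed
  have pw: "ennreal (cnt X w B * cnt X w C) = ennreal (cnt X w (B \<inter> C)) + ennreal (cnt X w B * cnt X w C - cnt X w (B \<inter> C))"
    and pw2: "ennreal (cnt X w B * cnt X w C - cnt X w (B \<inter> C)) = (\<integral>\<^sup>+ p. indicator (B \<times> C) p \<partial>count_space (pairs2 X w))"
    if w: "w \<in> space M" for w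
  proof -
    have cs: "card (X w \<inter> B) * card (X w \<inter> C) = card (X w \<inter> (B \<inter> C)) + card (pairs2 X w \<inter> (B \<times> C))"
      by (rule card_split[OF w B(2) C(2)])
    then have e: "cnt X w B * cnt X w C - cnt X w (B \<inter> C) = real (card (pairs2 X w \<inter> (B \<times> C)))"
      unfolding cnt_def by (metis add_diff_cancel_left' of_nat_add of_nat_mult)
    show "ennreal (cnt X w B * cnt X w C) = ennreal (cnt X w (B \<inter> C)) + ennreal (cnt X w B * cnt X w C - cnt X w (B \<inter> C))"
    proof -
      have e2: "cnt X w B * cnt X w C = cnt X w (B \<inter> C) + real (card (pairs2 X w \<inter> (B \<times> C)))"
        unfolding cnt_def using cs by (metis of_nat_add of_nat_mult)
      show ?thesis unfolding e unfolding e2 by (rule ennreal_plus) (auto simp: cnt_def)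
    qed
    show "ennreal (cnt X w B * cnt X w C - cnt X w (B \<inter> C)) = (\<integral>\<^sup>+ p. indicator (B \<times> C) p \<partial>count_space (pairs2 X w))"
      unfolding e pairs_int[OF w B(2) C(2)] by (simp add: ennreal_of_nat_eq_real_of_nat)
  qed
  have "(\<integral>\<^sup>+ w. ennreal (cnt X w B * cnt X w C) \<partial>M)
      = (\<integral>\<^sup>+ w. ennreal (cnt X w (B \<inter> C)) + ennreal (cnt X w B * cnt X w C - cnt X w (B \<inter> C)) \<partial>M)"
    by (intro nn_integral_cong) (rule pw)
  also have "\<dots> = (\<integral>\<^sup>+ w. ennreal (cnt X w (B \<inter> C)) \<partial>M) + (\<integral>\<^sup>+ w. ennreal (cnt X w B * cnt X w C - cnt X w (B \<inter> C)) \<partial>M)"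
    using meas_cnt[OF B] meas_cnt[OF C] meas_cnt[OF BC] by (intro nn_integral_add) auto
  also have "(\<integral>\<^sup>+ w. ennreal (cnt X w (B \<inter> C)) \<partial>M) = emeasure lborel (B \<inter> C)"
    by (rule nn_cnt[OF BC(2) BC(1)])
  also have "(\<integral>\<^sup>+ w. ennreal (cnt X w B * cnt X w C - cnt X w (B \<inter> C)) \<partial>M)
      = (\<integral>\<^sup>+ w. (\<integral>\<^sup>+ p. indicator (B \<times> C) p \<partial>count_space (pairs2 X w)) \<partial>M)"
    by (intro nn_integral_cong) (rule pw2)
  also have "\<dots> = (\<integral>\<^sup>+ y. indicator C y * emeasure A {x. x + y \<in> B} \<partial>lborel)"
    unfolding r inner ..
  finally show ?thesis .
qed

end

context PPs begin

lemma second: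
  assumes B: "B \<in> sets borel" "bounded B" and C: "C \<in> sets borel" "bounded C"
  shows "integrable M (\<lambda>w. cnt X w B * cnt X w C)"
    and "expectation (\<lambda>w. cnt X w B * cnt X w C)
       = measure lborel (B \<inter> C) + measure lborel B * measure lborel C + Ib Bp Bn (ov B C)"
proof -
  define l where "l = measure lborel B"
  define p where "p y = measure Bp {x. x + y \<in> B}" for y
  define n where "n y = measure Bn {x. x + y \<in> B}" for y
  have mp: "p \<in> borel_measurable lborel" unfolding p_def measurable_cong_sets[OF sets_lborel refl]
    by (rule shift_meas(1)[OF Bp_fin sBp B(1) C(1)])
  have mn: "n \<in> borel_measurable lborel" unfolding n_def measurable_cong_sets[OF sets_lborel refl]
    by (rule shift_meas(1)[OF Bn_fin sBn B(1) C(1)])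
  have mi: "indicator C \<in> borel_measurable lborel" using C(1) by (intro borel_measurable_indicator) simp
  note mp[unfolded measurable_cong_sets[OF sets_lborel refl], measurable]
  note mn[unfolded measurable_cong_sets[OF sets_lborel refl], measurable]
  note C(1)[measurable]
  have r_nn: "0 \<le> l + p y - n y" for y unfolding l_def p_def n_def by (rule A_shift(2)[OF B])
  define T where "T = (\<integral>\<^sup>+ y. indicator C y * emeasure A {x. x + y \<in> B} \<partial>lborel)"
  have T: "T = (\<integral>\<^sup>+ y. ennreal (indicator C y * (l + p y - n y)) \<partial>lborel)"
    unfolding T_def
  proof (intro nn_integral_cong)
    fix y
    show "indicator C y * emeasure A {x. x + y \<in> B} = ennreal (indicator C y * (l + p y - n y))"
      unfolding A_shift(1)[OF B] l_def p_def n_def by (simp add: indicator_def)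
  qed
  have "T + (\<integral>\<^sup>+ y. ennreal (indicator C y * n y) \<partial>lborel)
     = (\<integral>\<^sup>+ y. ennreal (indicator C y * (l + p y - n y)) + ennreal (indicator C y * n y) \<partial>lborel)"
    unfolding T by (intro nn_integral_add[symmetric]) (unfold measurable_cong_sets[OF sets_lborel refl], measurable)+
  also have "\<dots> = (\<integral>\<^sup>+ y. ennreal (indicator C y * l) + ennreal (indicator C y * p y) \<partial>lborel)"
  proof (intro nn_integral_cong)
    fix y
    have "ennreal (indicator C y * (l + p y - n y)) + ennreal (indicator C y * n y)
        = ennreal (indicator C y * (l + p y - n y) + indicator C y * n y)"
      using r_nn[of y] by (intro ennreal_plus[symmetric]) (auto simp: n_def)
    also have "\<dots> = ennreal (indicator C y * l + indicator C y * p y)" by (simp add: algebra_simps)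
    also have "\<dots> = ennreal (indicator C y * l) + ennreal (indicator C y * p y)"
      by (intro ennreal_plus) (auto simp: l_def p_def)
    finally show "ennreal (indicator C y * (l + p y - n y)) + ennreal (indicator C y * n y)
        = ennreal (indicator C y * l) + ennreal (indicator C y * p y)" .
  qed
  also have "\<dots> = (\<integral>\<^sup>+ y. ennreal (indicator C y * l) \<partial>lborel) + (\<integral>\<^sup>+ y. ennreal (indicator C y * p y) \<partial>lborel)"
    by (intro nn_integral_add) (unfold measurable_cong_sets[OF sets_lborel refl], measurable)+
  also have "(\<integral>\<^sup>+ y. ennreal (indicator C y * l) \<partial>lborel) = ennreal (l * measure lborel C)"
  proof -
    have "(\<integral>\<^sup>+ y. ennreal (indicator C y * l) \<partial>lborel) = (\<integral>\<^sup>+ y. ennreal l * indicator C y \<partial>lborel)"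
      by (intro nn_integral_cong) (simp add: indicator_def)
    also have "\<dots> = ennreal l * emeasure lborel C"
      using C(1) by (intro nn_integral_cmult_indicator) simp
    also have "\<dots> = ennreal l * ennreal (measure lborel C)"
      using bounded_fin_lborel[OF C(2)] by (simp add: emeasure_eq_ennreal_measure)
    also have "\<dots> = ennreal (l * measure lborel C)"
      by (rule ennreal_mult''[symmetric]) (simp add: l_def)
    finally show ?thesis .
  qed
  also have "(\<integral>\<^sup>+ y. ennreal (indicator C y * p y) \<partial>lborel) = ennreal (\<integral>x. ov B C x \<partial>Bp)"
    unfolding p_def by (rule tonelli_real[OF Bp_fin sBp B(1) C])
  also have "(\<integral>\<^sup>+ y. ennreal (indicator C y * n y) \<partial>lborel) = ennreal (\<integral>x. ov B C x \<partial>Bn)"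
    unfolding n_def by (rule tonelli_real[OF Bn_fin sBn B(1) C])
  finally have Teq: "T + ennreal (\<integral>x. ov B C x \<partial>Bn) = ennreal (l * measure lborel C) + ennreal (\<integral>x. ov B C x \<partial>Bp)" .
  have In: "0 \<le> (\<integral>x. ov B C x \<partial>Bn)" and Ip: "0 \<le> (\<integral>x. ov B C x \<partial>Bp)"
    by (auto intro!: integral_nonneg_AE simp: ov_nonneg)
  have lC: "0 \<le> l * measure lborel C" by (simp add: l_def)
  have Tfin: "T \<noteq> \<top>"
  proof -
    have "T \<le> T + ennreal (\<integral>x. ov B C x \<partial>Bn)" by simp
    also have "\<dots> < \<top>" unfolding Teq by simp
    finally show ?thesis by simp
  qed
  then obtain t where t: "T = ennreal t" "0 \<le> t" by (cases T) auto
  have "ennreal (t + (\<integral>x. ov B C x \<partial>Bn)) = ennreal (l * measure lborel C + (\<integral>x. ov B C x \<partial>Bp))"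
    using Teq t In Ip lC by (simp add: ennreal_plus)
  then have teq: "t = l * measure lborel C + (\<integral>x. ov B C x \<partial>Bp) - (\<integral>x. ov B C x \<partial>Bn)"
    using t(2) In Ip lC by (subst (asm) ennreal_inj) auto
  have hb: "has_bochner_integral M (\<lambda>w. cnt X w B * cnt X w C) (measure lborel (B \<inter> C) + t)"
  proof (rule has_bochner_integral_nn_integral)
    show "(\<lambda>w. cnt X w B * cnt X w C) \<in> borel_measurable M" using meas_cnt[OF B] meas_cnt[OF C] by auto
    show "AE x in M. 0 \<le> cnt X x B * cnt X x C" by (simp add: cnt_def)
    show "0 \<le> measure lborel (B \<inter> C) + t" using t(2) by simp
    have "(\<integral>\<^sup>+ w. ennreal (cnt X w B * cnt X w C) \<partial>M) = emeasure lborel (B \<inter> C) + T"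
      unfolding T_def by (rule second_nn[OF B C])
    also have "\<dots> = ennreal (measure lborel (B \<inter> C)) + ennreal t"
    proof -
      have "bounded (B \<inter> C)" using B(2) by (rule bounded_subset) auto
      then have "emeasure lborel (B \<inter> C) < \<top>" using bounded_fin_lborel by simp
      then show ?thesis using t by (simp add: emeasure_eq_ennreal_measure)
    qed
    also have "\<dots> = ennreal (measure lborel (B \<inter> C) + t)" using t(2) by (simp add: ennreal_plus)
    finally show "(\<integral>\<^sup>+ w. ennreal (cnt X w B * cnt X w C) \<partial>M) = ennreal (measure lborel (B \<inter> C) + t)" .
  qed
  then show "integrable M (\<lambda>w. cnt X w B * cnt X w C)" by (simp add: has_bochner_integral_iff)
  from hb show "expectation (\<lambda>w. cnt X w B * cnt X w C)
       = measure lborel (B \<inter> C) + measure lborel B * measure lborel C + Ib Bp Bn (ov B C)"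
    by (simp add: has_bochner_integral_iff teq Ib_def l_def)
qed

end

lemma meas_Icc: "measure lborel {a..b::real} = max 0 (b - a)"
  by (cases "a \<le> b") auto

lemma ov_Icc: "ov {a..b} {c..d} x = max 0 (min d (b - x) - max c (a - x))"
proof -
  have e: "{y\<in>{c..d}. x + y \<in> {a..b}} = {max c (a - x) .. min d (b - x)}" by auto
  show ?thesis unfolding ov_def e by (rule meas_Icc)
qed

context PPs begin

lemma cov_formula:
  assumes B: "B \<in> sets borel" "bounded B" and C: "C \<in> sets borel" "bounded C"
  shows "cov_cnt M X B C = measure lborel (B \<inter> C) + Ib Bp Bn (ov B C)"
proof -
  note iB = int_cnt[OF B] and iC = int_cnt[OF C] and iBC = second[OF B C]
  define a where "a = measure lborel B"
  define b where "b = measure lborel C"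
  have "cov_cnt M X B C = expectation (\<lambda>w. (cnt X w B - a) * (cnt X w C - b))"
    unfolding cov_cnt_def a_def b_def iB(2) iC(2) ..
  also have "\<dots> = expectation (\<lambda>w. cnt X w B * cnt X w C - b * cnt X w B - a * cnt X w C + a * b)"
    by (simp add: algebra_simps)
  also have "\<dots> = expectation (\<lambda>w. cnt X w B * cnt X w C) - b * expectation (\<lambda>w. cnt X w B)
       - a * expectation (\<lambda>w. cnt X w C) + a * b"
    using iB(1) iC(1) iBC(1) prob_space by (simp add: integral_diff integral_add)
  also have "\<dots> = measure lborel (B \<inter> C) + Ib Bp Bn (ov B C)"
    unfolding iBC(2) iB(2) iC(2) a_def b_def by simp
  finally show ?thesis .
qed

lemma var_is_cov: "var_cnt M X B = cov_cnt M X B B"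
  unfolding var_cnt_def cov_cnt_def by (simp add: power2_eq_square)

lemma var_formula:
  assumes B: "B \<in> sets borel" "bounded B"
  shows "var_cnt M X B = measure lborel B + Ib Bp Bn (ov B B)"
  unfolding var_is_cov cov_formula[OF B B] by simp

lemma var_lower:
  assumes B: "B \<in> sets borel" "bounded B" and d: "0 \<le> d" "\<And>k::nat. d \<le> \<bar>real k - measure lborel B\<bar>"
  shows "d\<^sup>2 \<le> var_cnt M X B"
proof -
  note iB = int_cnt[OF B] and iBB = second[OF B B]
  define m where "m = measure lborel B"
  have int2: "integrable M (\<lambda>w. (cnt X w B - m)\<^sup>2)"
  proof -
    have "integrable M (\<lambda>w. cnt X w B * cnt X w B - 2 * m * cnt X w B + m * m)"
      using iB(1) iBB(1) by auto
    then show ?thesis by (simp add: power2_eq_square algebra_simps)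
  qed
  have "d\<^sup>2 = expectation (\<lambda>w. d\<^sup>2)" using prob_space by simp
  also have "\<dots> \<le> expectation (\<lambda>w. (cnt X w B - m)\<^sup>2)"
  proof (rule integral_mono[OF _ int2])
    show "integrable M (\<lambda>w. d\<^sup>2)" by simp
    fix w
    have "d \<le> \<bar>cnt X w B - m\<bar>" unfolding cnt_def m_def by (rule d(2))
    then show "d\<^sup>2 \<le> (cnt X w B - m)\<^sup>2" using d(1)
      by (metis abs_le_square_iff abs_of_nonneg)
  qed
  also have "\<dots> = var_cnt M X B" unfolding var_cnt_def m_def iB(2) ..
  finally show ?thesis .
qed

end

context PPs begin

lemma bm_int:
  fixes f :: "real \<Rightarrow> real" and K :: real
  assumes "f \<in> borel_measurable borel" "\<And>x. \<bar>f x\<bar> \<le> K"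
  shows "integrable Bp f" "integrable Bn f"
proof -
  interpret P: finite_measure Bp by (rule Bp_fin)
  interpret N: finite_measure Bn by (rule Bn_fin)
  show "integrable Bp f"
    by (rule P.integrable_const_bound[where B=K]) (use assms in \<open>auto simp: measurable_cong_sets[OF sBp refl]\<close>)
  show "integrable Bn f"
    by (rule N.integrable_const_bound[where B=K]) (use assms in \<open>auto simp: measurable_cong_sets[OF sBn refl]\<close>)
qed

lemma Ib_add: "integrable Bp f \<Longrightarrow> integrable Bn f \<Longrightarrow> integrable Bp g \<Longrightarrow> integrable Bn g \<Longrightarrow>
   Ib Bp Bn (\<lambda>x. f x + g x) = Ib Bp Bn f + Ib Bp Bn g"
  unfolding Ib_def by simp

lemma Ib_diff: "integrable Bp f \<Longrightarrow> integrable Bn f \<Longrightarrow> integrable Bp g \<Longrightarrow> integrable Bn g \<Longrightarrow>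
   Ib Bp Bn (\<lambda>x. f x - g x) = Ib Bp Bn f - Ib Bp Bn g"
  unfolding Ib_def by simp

lemma Ib_cmult: "Ib Bp Bn (\<lambda>x. c * f x) = c * Ib Bp Bn f"
  unfolding Ib_def by (simp add: right_diff_distrib)

lemma Ib_divide: "Ib Bp Bn (\<lambda>x. f x / c) = Ib Bp Bn f / c"
  unfolding Ib_def by (simp add: diff_divide_distrib)

lemma Ib_const: "Ib Bp Bn (\<lambda>x. c) = c * Ib Bp Bn (\<lambda>x. 1)"
  using Ib_cmult[of c "\<lambda>x. 1"] by simp

lemma Ib_cong: "(\<And>x. f x = g x) \<Longrightarrow> Ib Bp Bn f = Ib Bp Bn g"
  by (metis ext)

lemma Ib_tendsto:
  fixes s :: "real \<Rightarrow> real \<Rightarrow> real" and f :: "real \<Rightarrow> real" and K :: real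
  assumes m: "\<And>t. s t \<in> borel_measurable borel" "f \<in> borel_measurable borel"
    and b: "\<And>t x. \<bar>s t x\<bar> \<le> K"
    and lim: "\<And>x. ((\<lambda>t. s t x) \<longlongrightarrow> f x) at_top"
  shows "((\<lambda>t. Ib Bp Bn (s t)) \<longlongrightarrow> Ib Bp Bn f) at_top"
proof -
  interpret P: finite_measure Bp by (rule Bp_fin)
  interpret N: finite_measure Bn by (rule Bn_fin)
  have 1: "((\<lambda>t. integral\<^sup>L Bp (s t)) \<longlongrightarrow> integral\<^sup>L Bp f) at_top"
    by (rule integral_dominated_convergence_at_top[where w="\<lambda>x. K"])
       (use m b lim in \<open>auto simp: measurable_cong_sets[OF sBp refl]\<close>)
  have 2: "((\<lambda>t. integral\<^sup>L Bn (s t)) \<longlongrightarrow> integral\<^sup>L Bn f) at_top"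
    by (rule integral_dominated_convergence_at_top[where w="\<lambda>x. K"])
       (use m b lim in \<open>auto simp: measurable_cong_sets[OF sBn refl]\<close>)
  show ?thesis unfolding Ib_def by (rule tendsto_diff[OF 1 2])
qed

lemma cov_sym: "cov_cnt M X B C = cov_cnt M X C B"
  unfolding cov_cnt_def by (simp add: mult.commute)

lemma Ib_ov_sym:
  assumes B: "B \<in> sets borel" "bounded B" and C: "C \<in> sets borel" "bounded C"
  shows "Ib Bp Bn (ov B C) = Ib Bp Bn (ov C B)"
  using cov_sym[of B C] cov_formula[OF B C] cov_formula[OF C B] by (simp add: Int_commute)

end

context PPs begin

lemma Icc_bounded: "bounded {a..b::real}" by simp

lemma var_Lam:
  assumes y: "0 \<le> y"
  shows "var_cnt M X (Lam y t) = y + Ib Bp Bn (\<lambda>x. max 0 (y - \<bar>x\<bar>))"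
proof -
  have "var_cnt M X (Lam y t) = measure lborel {t..t+y} + Ib Bp Bn (ov {t..t+y} {t..t+y})"
    unfolding Lam_def by (rule var_formula) auto
  also have "measure lborel {t..t+y} = y" using y by (simp add: meas_Icc)
  also have "Ib Bp Bn (ov {t..t+y} {t..t+y}) = Ib Bp Bn (\<lambda>x. max 0 (y - \<bar>x\<bar>))"
    by (rule Ib_cong) (simp add: ov_Icc max_def min_def abs_if)
  finally show ?thesis .
qed

lemma Ib_one:
  assumes hu: "hyperuniform M X"
  shows "Ib Bp Bn (\<lambda>x. 1) = -1"
proof -
  define s where "s t x = min 1 (max 0 (1 - \<bar>x\<bar> / t))" for t x :: real
  have ms: "s t \<in> borel_measurable borel" for t unfolding s_def by measurable
  have lim1: "((\<lambda>t. Ib Bp Bn (s t)) \<longlongrightarrow> Ib Bp Bn (\<lambda>x. 1)) at_top"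
  proof (rule Ib_tendsto[where K=1])
    show "s t \<in> borel_measurable borel" for t by (rule ms)
    show "(\<lambda>x. 1::real) \<in> borel_measurable borel" by simp
    show "\<bar>s t x\<bar> \<le> 1" for t x unfolding s_def by simp
    fix x :: real
    have "((\<lambda>t. \<bar>x\<bar> / t) \<longlongrightarrow> 0) at_top"
      by (rule tendsto_divide_0[OF tendsto_const filterlim_at_top_imp_at_infinity[OF filterlim_ident]])
    then have "((\<lambda>t. min 1 (max 0 (1 - \<bar>x\<bar> / t))) \<longlongrightarrow> min 1 (max 0 (1 - 0))) at_top"
      by (intro tendsto_min tendsto_max tendsto_diff tendsto_const)
    then show "((\<lambda>t. s t x) \<longlongrightarrow> 1) at_top" unfolding s_def by simp
  qed
  have ev: "eventually (\<lambda>t. var_cnt M X (Lam t 0) / t = 1 + Ib Bp Bn (s t)) at_top"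
  proof (rule eventually_at_top_linorderI[of 1])
    fix t :: real assume t: "1 \<le> t"
    have "var_cnt M X (Lam t 0) / t = (t + Ib Bp Bn (\<lambda>x. max 0 (t - \<bar>x\<bar>))) / t"
      using t by (simp add: var_Lam)
    also have "\<dots> = 1 + Ib Bp Bn (\<lambda>x. max 0 (t - \<bar>x\<bar>)) / t" using t by (simp add: add_divide_distrib)
    also have "Ib Bp Bn (\<lambda>x. max 0 (t - \<bar>x\<bar>)) / t = Ib Bp Bn (\<lambda>x. max 0 (t - \<bar>x\<bar>) / t)"
      by (rule Ib_divide[symmetric])
    also have "\<dots> = Ib Bp Bn (s t)"
    proof (rule Ib_cong)
      fix x
      have "max 0 (t - \<bar>x\<bar>) / t = max 0 (1 - \<bar>x\<bar> / t)" using t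
        by (simp add: max_def field_simps)
      moreover have "max 0 (1 - \<bar>x\<bar> / t) \<le> 1" using t by (simp add: max_def)
      ultimately show "max 0 (t - \<bar>x\<bar>) / t = s t x" unfolding s_def by simp
    qed
    finally show "var_cnt M X (Lam t 0) / t = 1 + Ib Bp Bn (s t)" .
  qed
  have "((\<lambda>t. var_cnt M X (Lam t 0) / t) \<longlongrightarrow> 1 + Ib Bp Bn (\<lambda>x. 1)) at_top"
    by (rule Lim_transform_eventually[OF tendsto_add[OF tendsto_const lim1]])
       (use ev in \<open>auto elim: eventually_mono\<close>)
  moreover have "((\<lambda>t. var_cnt M X (Lam t 0) / t) \<longlongrightarrow> 0) at_top"
    using hu unfolding hyperuniform_def .
  ultimately have "1 + Ib Bp Bn (\<lambda>x. 1) = 0" by (rule tendsto_unique[OF trivial_limit_at_top_linorder])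
  then show ?thesis by simp
qed

lemma clamp_sym:
  assumes m: "0 \<le> m"
  shows "Ib Bp Bn (\<lambda>x. max 0 (min m x)) = Ib Bp Bn (\<lambda>x. max 0 (min m (- x)))"
proof -
  define s1 where "s1 K x = max 0 (min m (m + K - x) - max 0 (m - x))" for K x :: real
  define s2 where "s2 K x = max 0 (min (m + K) (m - x) - max m (0 - x))" for K x :: real
  have eq: "Ib Bp Bn (s1 K) = Ib Bp Bn (s2 K)" for K
  proof -
    have "Ib Bp Bn (ov {m..m+K} {0..m}) = Ib Bp Bn (ov {0..m} {m..m+K})"
      by (rule Ib_ov_sym) auto
    moreover have "ov {m..m+K} {0..m} = s1 K" unfolding s1_def by (rule ext) (simp add: ov_Icc)
    moreover have "ov {0..m} {m..m+K} = s2 K" unfolding s2_def by (rule ext) (simp add: ov_Icc)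
    ultimately show ?thesis by simp
  qed
  have l1: "((\<lambda>K. Ib Bp Bn (s1 K)) \<longlongrightarrow> Ib Bp Bn (\<lambda>x. max 0 (min m x))) at_top"
  proof (rule Ib_tendsto[where K=m])
    show "s1 t \<in> borel_measurable borel" for t unfolding s1_def by measurable
    show "(\<lambda>x. max 0 (min m x)) \<in> borel_measurable borel" by measurable
    show "\<bar>s1 t x\<bar> \<le> m" for t x unfolding s1_def using m by (simp add: max_def min_def)
    fix x
    show "((\<lambda>t. s1 t x) \<longlongrightarrow> max 0 (min m x)) at_top"
    proof (rule tendsto_eventually, rule eventually_at_top_linorderI[of "\<bar>x\<bar>"])
      fix K assume "\<bar>x\<bar> \<le> K"
      then have "x \<le> K" "- x \<le> K" by auto
      then show "s1 K x = max 0 (min m x)" unfolding s1_def using m by (auto simp: max_def min_def)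
    qed
  qed
  have l2: "((\<lambda>K. Ib Bp Bn (s1 K)) \<longlongrightarrow> Ib Bp Bn (\<lambda>x. max 0 (min m (- x)))) at_top"
    unfolding eq
  proof (rule Ib_tendsto[where K=m])
    show "s2 t \<in> borel_measurable borel" for t unfolding s2_def by measurable
    show "(\<lambda>x. max 0 (min m (- x))) \<in> borel_measurable borel" by measurable
    show "\<bar>s2 t x\<bar> \<le> m" for t x unfolding s2_def using m by (simp add: max_def min_def)
    fix x
    show "((\<lambda>t. s2 t x) \<longlongrightarrow> max 0 (min m (- x))) at_top"
    proof (rule tendsto_eventually, rule eventually_at_top_linorderI[of "\<bar>x\<bar>"])
      fix K assume "\<bar>x\<bar> \<le> K"
      then have "x \<le> K" "- x \<le> K" by auto
      then show "s2 K x = max 0 (min m (- x))" unfolding s2_def using m by (auto simp: max_def min_def)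
    qed
  qed
  show ?thesis using tendsto_unique[OF _ l1 l2] by simp
qed

end

lemma tail_integral:
  fixes Q :: "real measure"
  assumes Q: "finite_measure Q" "sets Q = sets borel" and y: "0 \<le> y"
  shows "((\<lambda>x. measure Q {x..}) has_integral (\<integral>u. max 0 (min y u) \<partial>Q)) {0..y}"
proof -
  interpret Q: finite_measure Q by fact
  interpret pair_sigma_finite Q lborel
    by (simp add: Q.sigma_finite_measure_axioms lborel.sigma_finite_measure_axioms pair_sigma_finite.intro)
  define S where "S = {(u, x::real). 0 \<le> x \<and> x \<le> y \<and> x \<le> u}"
  have S: "S \<in> sets (borel \<Otimes>\<^sub>M borel)"
  proof -
    have "Measurable.pred (borel \<Otimes>\<^sub>M borel) (\<lambda>p::real\<times>real. 0 \<le> snd p \<and> snd p \<le> y \<and> snd p \<le> fst p)"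
      by measurable
    then have "{p::real\<times>real. 0 \<le> snd p \<and> snd p \<le> y \<and> snd p \<le> fst p} \<in> sets (borel \<Otimes>\<^sub>M borel)"
      unfolding pred_def by (simp add: space_pair_measure)
    moreover have "S = {p::real\<times>real. 0 \<le> snd p \<and> snd p \<le> y \<and> snd p \<le> fst p}"
      unfolding S_def by auto
    ultimately show ?thesis by simp
  qed
  let ?f = "\<lambda>u x. indicator S (u, x) :: ennreal"
  have m: "(\<lambda>(u, x). ?f u x) \<in> borel_measurable (Q \<Otimes>\<^sub>M lborel)"
  proof -
    have "S \<in> sets (Q \<Otimes>\<^sub>M lborel)"
      using S unfolding sets_pair_measure_cong[OF Q(2) sets_lborel] .
    then show ?thesis by (auto intro: borel_measurable_indicator)
  qed
  have F: "(\<integral>\<^sup>+ x. \<integral>\<^sup>+ u. ?f u x \<partial>Q \<partial>lborel) = (\<integral>\<^sup>+ u. \<integral>\<^sup>+ x. ?f u x \<partial>lborel \<partial>Q)"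
    by (rule Fubini'[OF m])
  have I1: "(\<integral>\<^sup>+ u. ?f u x \<partial>Q) = ennreal (indicator {0..y} x * measure Q {x..})" for x
  proof -
    have "(\<integral>\<^sup>+ u. ?f u x \<partial>Q) = (\<integral>\<^sup>+ u. indicator {0..y} x * indicator {x..} u \<partial>Q)"
      by (intro nn_integral_cong) (auto simp: indicator_def S_def)
    also have "\<dots> = indicator {0..y} x * emeasure Q {x..}"
      using Q(2) by (intro nn_integral_cmult_indicator) auto
    also have "\<dots> = ennreal (indicator {0..y} x * measure Q {x..})"
      by (simp add: Q.emeasure_eq_measure indicator_def)
    finally show ?thesis .
  qed
  have I2: "(\<integral>\<^sup>+ x. ?f u x \<partial>lborel) = ennreal (max 0 (min y u))" for u
  proof -
    have "(\<integral>\<^sup>+ x. ?f u x \<partial>lborel) = (\<integral>\<^sup>+ x. indicator {0..min y u} x \<partial>lborel)"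
      by (intro nn_integral_cong) (auto simp: indicator_def S_def)
    also have "\<dots> = emeasure lborel {0..min y u}" by (rule nn_integral_indicator) simp
    also have "\<dots> = ennreal (max 0 (min y u))" by (cases "0 \<le> min y u") (auto simp: ennreal_eq_0_iff)
    finally show ?thesis .
  qed
  have intc: "integrable Q (\<lambda>u. max 0 (min y u))"
    by (rule Q.integrable_const_bound[where B=y]) (use y Q(2) in \<open>auto simp: measurable_cong_sets[OF Q(2) refl]\<close>)
  have "(\<integral>\<^sup>+ x. ennreal (indicator {0..y} x * measure Q {x..}) \<partial>lborel) = (\<integral>\<^sup>+ u. ennreal (max 0 (min y u)) \<partial>Q)"
    using F unfolding I1 I2 .
  also have "\<dots> = ennreal (\<integral>u. max 0 (min y u) \<partial>Q)"
    by (rule nn_integral_eq_integral[OF intc]) auto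
  finally have nn: "(\<integral>\<^sup>+ x. ennreal (indicator {0..y} x * measure Q {x..}) \<partial>lborel) = ennreal (\<integral>u. max 0 (min y u) \<partial>Q)" .
  have mono: "mono (\<lambda>x. - measure Q {x..})"
    by (rule monoI) (auto intro!: Q.finite_measure_mono simp: Q(2))
  have mq: "(\<lambda>x. measure Q {x..}) \<in> borel_measurable borel"
  proof -
    have "(\<lambda>x. - (- measure Q {x..})) \<in> borel_measurable borel"
      using borel_measurable_mono[OF mono] by (rule borel_measurable_uminus)
    then show ?thesis by simp
  qed
  have "((\<lambda>x. indicator {0..y} x * measure Q {x..}) has_integral (\<integral>u. max 0 (min y u) \<partial>Q)) UNIV"
  proof (rule nn_integral_has_integral[OF _ _ nn])
    show "(\<lambda>x. indicator {0..y} x * measure Q {x..}) \<in> borel_measurable borel"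
      using mq by (intro borel_measurable_times) auto
    show "0 \<le> indicator {0..y} x * measure Q {x..}" for x by simp
    show "0 \<le> (\<integral>u. max 0 (min y u) \<partial>Q)" by (rule integral_nonneg_AE) auto
  qed
  moreover have "(\<lambda>x. indicator {0..y} x * measure Q {x..}) = (\<lambda>x. if x \<in> {0..y} then measure Q {x..} else 0)"
    by (auto simp: indicator_def)
  ultimately have "((\<lambda>x. if x \<in> {0..y} then measure Q {x..} else 0) has_integral (\<integral>u. max 0 (min y u) \<partial>Q)) UNIV"
    by simp
  then show ?thesis by (simp only: has_integral_restrict_UNIV)
qed


lemma arith_T: "0 \<le> (n::real) \<Longrightarrow> max 0 (n - \<bar>s + x\<bar>) + max 0 (n - \<bar>s - x\<bar>)
  = max 0 (\<bar>s + n\<bar> - \<bar>x\<bar>) + max 0 (\<bar>s - n\<bar> - \<bar>x\<bar>) - 2 * max 0 (\<bar>s\<bar> - \<bar>x\<bar>)"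
  by (simp add: max_def abs_if)

lemma arith_T0: "0 \<le> (n::real) \<Longrightarrow> max 0 (n - \<bar>s\<bar>) = (\<bar>s + n\<bar> + \<bar>s - n\<bar> - 2 * \<bar>s\<bar>) / 2"
  by (simp add: max_def abs_if)

context PPs begin

lemma Fb_has_integral:
  assumes y: "0 \<le> y"
  shows "(Fb Bp Bn has_integral Ib Bp Bn (\<lambda>x. max 0 (min y x))) {0..y}"
proof -
  have "((\<lambda>x. measure Bp {x..} - measure Bn {x..}) has_integral
      ((\<integral>u. max 0 (min y u) \<partial>Bp) - (\<integral>u. max 0 (min y u) \<partial>Bn))) {0..y}"
    by (rule has_integral_diff[OF tail_integral[OF Bp_fin sBp y] tail_integral[OF Bn_fin sBn y]])
  moreover have "Fb Bp Bn = (\<lambda>x. measure Bp {x..} - measure Bn {x..})"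
    unfolding Fb_def beta_of_def ..
  ultimately show ?thesis unfolding Ib_def by simp
qed

lemma Gb_Ib: "0 \<le> y \<Longrightarrow> Gb Bp Bn y = - Ib Bp Bn (\<lambda>x. max 0 (min y x))"
  unfolding Gb_def using Fb_has_integral by (simp add: integral_unique)

lemma V_G:
  assumes hu: "hyperuniform M X" and m: "0 \<le> m"
  shows "m + Ib Bp Bn (\<lambda>x. max 0 (m - \<bar>x\<bar>)) = 2 * Gb Bp Bn m"
proof -
  define c where "c x = max 0 (min m x)" for x
  have mc: "c \<in> borel_measurable borel" unfolding c_def by measurable
  have mc2: "(\<lambda>x. c (- x)) \<in> borel_measurable borel" unfolding c_def by measurable
  have bc: "\<bar>c x\<bar> \<le> m" for x unfolding c_def using m by (simp add: max_def min_def)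
  have bc2: "\<bar>c (- x)\<bar> \<le> m" for x by (rule bc)
  note i1 = bm_int[OF mc bc] and i2 = bm_int[OF mc2 bc2]
  have i0: "integrable Bp (\<lambda>x. m)" "integrable Bn (\<lambda>x. m)"
  proof -
    have m0: "(\<lambda>x. m) \<in> borel_measurable borel" by simp
    have b0: "\<bar>m\<bar> \<le> \<bar>m\<bar>" for x :: real by simp
    show "integrable Bp (\<lambda>x. m)" "integrable Bn (\<lambda>x. m)" using bm_int[OF m0 b0] by auto
  qed
  have "Ib Bp Bn (\<lambda>x. max 0 (m - \<bar>x\<bar>)) = Ib Bp Bn (\<lambda>x. m - c x - c (- x))"
    by (rule Ib_cong) (use m in \<open>simp add: c_def max_def min_def abs_if\<close>)
  also have "\<dots> = Ib Bp Bn (\<lambda>x. m - c x) - Ib Bp Bn (\<lambda>x. c (- x))"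
    by (rule Ib_diff) (use i0 i1 i2 in auto)
  also have "Ib Bp Bn (\<lambda>x. m - c x) = Ib Bp Bn (\<lambda>x. m) - Ib Bp Bn c"
    by (rule Ib_diff) (use i0 i1 in auto)
  also have "Ib Bp Bn (\<lambda>x. m) = - m" using Ib_const[of m] Ib_one[OF hu] by simp
  also have "Ib Bp Bn (\<lambda>x. c (- x)) = Ib Bp Bn c" unfolding c_def using clamp_sym[OF m] by simp
  also have "Ib Bp Bn c = - Gb Bp Bn m" unfolding c_def Gb_Ib[OF m] by simp
  finally show ?thesis by simp
qed

lemma var_G:
  assumes hu: "hyperuniform M X" and y: "0 \<le> y"
  shows "var_cnt M X (Lam y t) = 2 * Gb Bp Bn y"
  using var_Lam[OF y] V_G[OF hu y] by simp

lemma T_int: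
  assumes n: "0 \<le> n" shows "integrable Bp (\<lambda>x. max 0 (n - \<bar>s + x\<bar>))" "integrable Bn (\<lambda>x. max 0 (n - \<bar>s + x\<bar>))"
proof -
  have m: "(\<lambda>x. max 0 (n - \<bar>s + x\<bar>)) \<in> borel_measurable borel" by measurable
  have bnd: "\<bar>max 0 (n - \<bar>s + x\<bar>)\<bar> \<le> n" for x using n by (simp add: max_def)
  show "integrable Bp (\<lambda>x. max 0 (n - \<bar>s + x\<bar>))" "integrable Bn (\<lambda>x. max 0 (n - \<bar>s + x\<bar>))"
    using bm_int[OF m bnd] by auto
qed

lemma P_int:
  shows "integrable Bp (\<lambda>x. max 0 (m - \<bar>x\<bar>))" "integrable Bn (\<lambda>x. max 0 (m - \<bar>x\<bar>))"
proof -
  have mm: "(\<lambda>x. max 0 (m - \<bar>x\<bar>)) \<in> borel_measurable borel" by measurable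
  have bnd: "\<bar>max 0 (m - \<bar>x\<bar>)\<bar> \<le> \<bar>m\<bar>" for x by (simp add: max_def)
  show "integrable Bp (\<lambda>x. max 0 (m - \<bar>x\<bar>))" "integrable Bn (\<lambda>x. max 0 (m - \<bar>x\<bar>))"
    using bm_int[OF mm bnd] by auto
qed

lemma cov_G:
  assumes hu: "hyperuniform M X" and n: "0 \<le> n"
  shows "cov_cnt M X (Lam n 0) (Lam n s)
     = Gb Bp Bn \<bar>s + n\<bar> + Gb Bp Bn \<bar>s - n\<bar> - 2 * Gb Bp Bn \<bar>s\<bar>"
proof -
  define T where "T u = max 0 (n - \<bar>u\<bar>)" for u
  define P where "P m x = max 0 (m - \<bar>x\<bar>)" for m x :: real
  have L: "Lam n 0 = {0..n}" "Lam n s = {s..s+n}" by (simp_all add: Lam_def)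
  have "cov_cnt M X (Lam n 0) (Lam n s) = measure lborel ({0..n} \<inter> {s..s+n}) + Ib Bp Bn (ov {0..n} {s..s+n})"
    unfolding L by (rule cov_formula) auto
  also have "measure lborel ({0..n} \<inter> {s..s+n}) = T s"
  proof -
    have "{0..n} \<inter> {s..s+n} = {max 0 s .. min n (s+n)}" by auto
    then show ?thesis unfolding T_def meas_Icc by (simp add: max_def min_def abs_if)
  qed
  also have "ov {0..n} {s..s+n} = (\<lambda>x. T (s + x))"
    unfolding T_def by (rule ext) (simp add: ov_Icc max_def min_def abs_if)
  finally have c1: "cov_cnt M X (Lam n 0) (Lam n s) = T s + Ib Bp Bn (\<lambda>x. T (s + x))" .
  have "ov {s..s+n} {0..n} = (\<lambda>x. T (s + - x))"
    unfolding T_def by (rule ext) (simp add: ov_Icc max_def min_def abs_if)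
  moreover have "Ib Bp Bn (ov {0..n} {s..s+n}) = Ib Bp Bn (ov {s..s+n} {0..n})"
    by (rule Ib_ov_sym) auto
  ultimately have sym: "Ib Bp Bn (\<lambda>x. T (s + x)) = Ib Bp Bn (\<lambda>x. T (s + - x))"
    using \<open>ov {0..n} {s..s+n} = (\<lambda>x. T (s + x))\<close> by simp
  have iT1: "integrable Bp (\<lambda>x. T (s + x))" "integrable Bn (\<lambda>x. T (s + x))"
    unfolding T_def using T_int[OF n] by auto
  have iT2: "integrable Bp (\<lambda>x. T (s + - x))" "integrable Bn (\<lambda>x. T (s + - x))"
  proof -
    have m: "(\<lambda>x. T (s + - x)) \<in> borel_measurable borel" unfolding T_def by measurable
    have bnd: "\<bar>T (s + - x)\<bar> \<le> n" for x using n unfolding T_def by (simp add: max_def)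
    show "integrable Bp (\<lambda>x. T (s + - x))" "integrable Bn (\<lambda>x. T (s + - x))"
      using bm_int[OF m bnd] by auto
  qed
  have iP: "integrable Bp (P m)" "integrable Bn (P m)" for m unfolding P_def using P_int by auto
  have "2 * Ib Bp Bn (\<lambda>x. T (s + x)) = Ib Bp Bn (\<lambda>x. T (s + x) + T (s + - x))"
    using sym Ib_add[OF iT1 iT2] by simp
  also have "\<dots> = Ib Bp Bn (\<lambda>x. P \<bar>s + n\<bar> x + P \<bar>s - n\<bar> x - 2 * P \<bar>s\<bar> x)"
    by (rule Ib_cong) (use arith_T[OF n] in \<open>simp add: T_def P_def diff_conv_add_uminus[symmetric]\<close>)
  also have "\<dots> = Ib Bp Bn (P \<bar>s + n\<bar>) + Ib Bp Bn (P \<bar>s - n\<bar>) - 2 * Ib Bp Bn (P \<bar>s\<bar>)"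
  proof -
    have "Ib Bp Bn (\<lambda>x. P \<bar>s + n\<bar> x + P \<bar>s - n\<bar> x - 2 * P \<bar>s\<bar> x)
        = Ib Bp Bn (\<lambda>x. P \<bar>s + n\<bar> x + P \<bar>s - n\<bar> x) - Ib Bp Bn (\<lambda>x. 2 * P \<bar>s\<bar> x)"
      by (rule Ib_diff) (use iP in auto)
    also have "Ib Bp Bn (\<lambda>x. P \<bar>s + n\<bar> x + P \<bar>s - n\<bar> x) = Ib Bp Bn (P \<bar>s + n\<bar>) + Ib Bp Bn (P \<bar>s - n\<bar>)"
      by (rule Ib_add) (use iP in auto)
    also have "Ib Bp Bn (\<lambda>x. 2 * P \<bar>s\<bar> x) = 2 * Ib Bp Bn (P \<bar>s\<bar>)" by (rule Ib_cmult)
    finally show ?thesis .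
  qed
  finally have c2: "2 * Ib Bp Bn (\<lambda>x. T (s + x)) = Ib Bp Bn (P \<bar>s + n\<bar>) + Ib Bp Bn (P \<bar>s - n\<bar>) - 2 * Ib Bp Bn (P \<bar>s\<bar>)" .
  have VG: "\<bar>u\<bar> + Ib Bp Bn (P \<bar>u\<bar>) = 2 * Gb Bp Bn \<bar>u\<bar>" for u
    unfolding P_def by (rule V_G[OF hu]) simp
  have Ts: "T s = (\<bar>s + n\<bar> + \<bar>s - n\<bar> - 2 * \<bar>s\<bar>) / 2" unfolding T_def by (rule arith_T0[OF n])
  show ?thesis unfolding c1 using c2 VG[of "s + n"] VG[of "s - n"] VG[of s] Ts by simp
qed

lemma G_half:
  assumes hu: "hyperuniform M X"
  shows "1/8 \<le> Gb Bp Bn (real k + 1/2)"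
proof -
  have "(1/2)\<^sup>2 \<le> var_cnt M X {0..real k + 1/2}"
  proof (rule var_lower)
    show "{0..real k + 1/2} \<in> sets borel" "bounded {0..real k + 1/2}" by auto
    show "0 \<le> (1/2::real)" by simp
    fix j :: nat
    have "measure lborel {0..real k + 1/2} = real k + 1/2" by (simp add: meas_Icc)
    moreover have "1/2 \<le> \<bar>real j - (real k + 1/2)\<bar>"
    proof (cases "j \<le> k")
      case True then show ?thesis by simp
    next
      case False then have "real k + 1 \<le> real j" by simp
      then show ?thesis by simp
    qed
    ultimately show "1/2 \<le> \<bar>real j - measure lborel {0..real k + 1/2}\<bar>" by simp
  qed
  moreover have "var_cnt M X {0..real k + 1/2} = 2 * Gb Bp Bn (real k + 1/2)"
    using var_G[OF hu, of "real k + 1/2" 0] by (simp add: Lam_def)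
  ultimately show ?thesis by (simp add: power2_eq_square)
qed

lemma G_diff:
  assumes "0 \<le> a" "a \<le> b"
  shows "Gb Bp Bn b - Gb Bp Bn a = - integral {a..b} (Fb Bp Bn)"
proof -
  have "0 \<le> b" using assms by simp
  then have "(Fb Bp Bn has_integral Ib Bp Bn (\<lambda>x. max 0 (min b x))) {0..b}" by (rule Fb_has_integral)
  then have int: "Fb Bp Bn integrable_on {0..b}" by blast
  have "integral {0..a} (Fb Bp Bn) + integral {a..b} (Fb Bp Bn) = integral {0..b} (Fb Bp Bn)"
    by (rule Henstock_Kurzweil_Integration.integral_combine[OF assms int])
  then show ?thesis unfolding Gb_def by simp
qed

lemma Fb_integrable: "0 \<le> a \<Longrightarrow> a \<le> b \<Longrightarrow> Fb Bp Bn integrable_on {a..b}"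
proof -
  assume "0 \<le> a" "a \<le> b"
  then have "(Fb Bp Bn has_integral Ib Bp Bn (\<lambda>x. max 0 (min b x))) {0..b}" by (intro Fb_has_integral) simp
  then have "Fb Bp Bn integrable_on {0..b}" by blast
  then show ?thesis by (rule integrable_subinterval_real) (use \<open>0 \<le> a\<close> in auto)
qed

end

lemma rv_lim0:
  assumes g0: "g 0 = 0" and rv: "regularly_varying g a" and x: "0 \<le> x"
  shows "((\<lambda>n. g (x * n) / g n) \<longlongrightarrow> x powr a) at_top"
proof (cases "x = 0")
  case True
  then show ?thesis using g0 by simp
next
  case False
  then show ?thesis using rv x unfolding regularly_varying_def by auto
qed

lemma target_eq:
  assumes a: "0 \<le> a"
  shows "(\<bar>z + 1\<bar> powr a + \<bar>z - 1\<bar> powr a - 2 * \<bar>z\<bar> powr a) / 2 = cov_target a z"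
proof (cases "0 < a")
  case True
  then show ?thesis unfolding cov_target_def by (simp add: abs_minus_commute field_simps)
next
  case False
  then have "a = 0" using a by simp
  then show ?thesis unfolding cov_target_def
    by (auto simp: powr_zero_eq_one)
qed

lemma AN1:
  fixes g :: "real \<Rightarrow> real" and r :: "real \<Rightarrow> real \<Rightarrow> real"
  assumes g0: "g 0 = 0" and rv: "regularly_varying g a" and a: "0 \<le> a"
    and req: "\<And>z n. 0 \<le> n \<Longrightarrow> r z n = (g (\<bar>z + 1\<bar> * n) + g (\<bar>z - 1\<bar> * n) - 2 * g (\<bar>z\<bar> * n)) / (2 * g n)"
  shows "(r z \<longlongrightarrow> cov_target a z) at_top"
proof -
  have ev: "eventually (\<lambda>n. (g (\<bar>z + 1\<bar> * n) / g n + g (\<bar>z - 1\<bar> * n) / g n - 2 * (g (\<bar>z\<bar> * n) / g n)) / 2 = r z n) at_top"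
  proof (rule eventually_at_top_linorderI[of 0])
    fix n :: real assume "0 \<le> n"
    then show "(g (\<bar>z + 1\<bar> * n) / g n + g (\<bar>z - 1\<bar> * n) / g n - 2 * (g (\<bar>z\<bar> * n) / g n)) / 2 = r z n"
      unfolding req[OF \<open>0 \<le> n\<close>] by (cases "g n = 0") (simp_all add: field_simps)
  qed
  have "((\<lambda>n. (g (\<bar>z + 1\<bar> * n) / g n + g (\<bar>z - 1\<bar> * n) / g n - 2 * (g (\<bar>z\<bar> * n) / g n)) / 2)
       \<longlongrightarrow> (\<bar>z + 1\<bar> powr a + \<bar>z - 1\<bar> powr a - 2 * \<bar>z\<bar> powr a) / 2) at_top"
    by (intro tendsto_divide tendsto_diff tendsto_add tendsto_mult tendsto_const rv_lim0[OF g0 rv]) auto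
  then have "(r z \<longlongrightarrow> (\<bar>z + 1\<bar> powr a + \<bar>z - 1\<bar> powr a - 2 * \<bar>z\<bar> powr a) / 2) at_top"
    by (rule Lim_transform_eventually) (rule ev)
  then show ?thesis unfolding target_eq[OF a] .
qed

lemma target_one: "0 \<le> a \<Longrightarrow> cov_target a 1 = 2 powr (a - 1) - 1"
  unfolding cov_target_def by (auto simp: powr_diff)


lemma pow23: "(2::nat) ^ a = 3 ^ b \<Longrightarrow> a = 0 \<and> b = 0"
proof -
  assume h: "(2::nat) ^ a = 3 ^ b"
  have "odd ((3::nat) ^ b)" by simp
  then have "odd ((2::nat) ^ a)" using h by simp
  then have "a = 0" by (cases a) auto
  then have "(3::nat) ^ b = 1" using h by simp
  then have "b = 0" by simp
  with \<open>a = 0\<close> show ?thesis by simp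
qed

lemma ln23_nat: "real a * ln 2 = real b * ln 3 \<Longrightarrow> a = 0 \<and> b = 0"
proof -
  assume h: "real a * ln 2 = real b * ln 3"
  have "ln ((2::real) ^ a) = ln ((3::real) ^ b)" using h by (simp add: ln_realpow)
  then have "(2::real) ^ a = 3 ^ b" by (subst (asm) ln_inj_iff) auto
  then have "real ((2::nat) ^ a) = real ((3::nat) ^ b)" by simp
  then have "(2::nat) ^ a = 3 ^ b" by (simp only: of_nat_eq_iff)
  then show ?thesis by (rule pow23)
qed

lemma ln23_int:
  assumes h: "real_of_int i * ln 2 + real_of_int j * ln 3 = 0"
  shows "i = 0 \<and> j = 0"
proof -
  have l2: "0 < ln (2::real)" and l3: "0 < ln (3::real)" by auto
  consider "0 \<le> i" "0 \<le> j" | "0 \<le> i" "j < 0" | "i < 0" "0 \<le> j" | "i < 0" "j < 0" by linarith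
  then show ?thesis
  proof cases
    case 1
    then have "0 \<le> real_of_int i * ln 2" "0 \<le> real_of_int j * ln 3" using l2 l3 by auto
    then have "real_of_int i * ln 2 = 0" "real_of_int j * ln 3 = 0" using h by linarith+
    then show ?thesis using l2 l3 by auto
  next
    case 2
    have "real (nat i) * ln 2 = real (nat (- j)) * ln 3" using 2 h by simp
    then have "nat (- j) = 0" using ln23_nat by blast
    then show ?thesis using 2 by simp
  next
    case 3
    have "real (nat (- i)) * ln 2 = real (nat j) * ln 3" using 3 h by simp
    then have "nat (- i) = 0" using ln23_nat by blast
    then show ?thesis using 3 by simp
  next
    case 4
    then have "real_of_int i * ln 2 < 0" "real_of_int j * ln 3 < 0" using l2 l3
      by (auto simp: mult_neg_pos)
    then show ?thesis using h by linarith
  qed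
qed

lemma Lin23:
  fixes p q :: real
  assumes H: "\<And>i j::int. 0 < real_of_int i * ln 2 + real_of_int j * ln 3 \<Longrightarrow> 0 \<le> real_of_int i * p + real_of_int j * q"
  shows "q * ln 2 = p * ln 3"
proof -
  have l2: "0 < ln (2::real)" and l3: "0 < ln (3::real)" by auto
  define \<theta> where "\<theta> = ln 3 / ln (2::real)"
  have p0: "0 \<le> p" using H[of 1 0] l2 by simp
  have q0: "0 \<le> q" using H[of 0 1] l3 by simp
  show ?thesis
  proof (rule ccontr)
    assume ne: "q * ln 2 \<noteq> p * ln 3"
    then consider "q * ln 2 > p * ln 3" | "q * ln 2 < p * ln 3" by linarith
    then show False
    proof cases
      case 1
      define u where "u = (if p > 0 then q / p else \<theta> + 1)"
      have "\<theta> < u"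
      proof (cases "p > 0")
        case True
        then show ?thesis using 1 l2 unfolding u_def \<theta>_def by (simp add: field_simps)
      qed (simp add: u_def)
      then obtain r where r: "r \<in> \<rat>" "\<theta> < r" "r < u" using Rats_dense_in_real by blast
      then obtain I J :: int where IJ: "J > 0" "r = of_int I / of_int J" by (auto elim: Rats_cases')
      have rp: "r * p < q"
      proof (cases "p > 0")
        case True
        then show ?thesis using r(3) unfolding u_def by (simp add: field_simps)
      next
        case False
        then have "p = 0" using p0 by simp
        then show ?thesis using 1 l2 by (simp add: zero_less_mult_iff)
      qed
      have "0 < real_of_int I * ln 2 + real_of_int (- J) * ln 3"
      proof -
        have "ln 3 < r * ln 2" using r(2) l2 unfolding \<theta>_def by (simp add: field_simps)
        then have "real_of_int J * ln 3 < real_of_int J * (r * ln 2)" using IJ(1) by simp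
        also have "real_of_int J * (r * ln 2) = real_of_int I * ln 2" using IJ by simp
        finally show ?thesis by simp
      qed
      from H[OF this] have "0 \<le> real_of_int I * p - real_of_int J * q" by simp
      moreover have "real_of_int J * (r * p) < real_of_int J * q" using rp IJ(1) by simp
      moreover have "real_of_int J * (r * p) = real_of_int I * p" using IJ by simp
      ultimately show False by simp
    next
      case 2
      have pp: "p > 0"
      proof (rule ccontr)
        assume "\<not> p > 0"
        then have "p = 0" using p0 by simp
        moreover have "0 \<le> q * ln 2" using q0 l2 by simp
        ultimately show False using 2 by simp
      qed
      have "q / p < \<theta>" using 2 pp l2 unfolding \<theta>_def by (simp add: field_simps)
      then obtain r where r: "r \<in> \<rat>" "q / p < r" "r < \<theta>" using Rats_dense_in_real by blast
      then obtain I J :: int where IJ: "J > 0" "r = of_int I / of_int J" by (auto elim: Rats_cases')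
      have "0 < real_of_int (- I) * ln 2 + real_of_int J * ln 3"
      proof -
        have "r * ln 2 < ln 3" using r(3) l2 unfolding \<theta>_def by (simp add: field_simps)
        then have "real_of_int J * (r * ln 2) < real_of_int J * ln 3" using IJ(1) by simp
        also have "real_of_int J * (r * ln 2) = real_of_int I * ln 2" using IJ by simp
        finally show ?thesis by simp
      qed
      from H[OF this] have "0 \<le> real_of_int J * q - real_of_int I * p" by simp
      moreover have "q < r * p" using r(2) pp by (simp add: field_simps)
      then have "real_of_int J * q < real_of_int J * (r * p)" using IJ(1) by simp
      moreover have "real_of_int J * (r * p) = real_of_int I * p" using IJ by simp
      ultimately show False by simp
    qed
  qed
qed

lemma small23:
  assumes e: "0 < \<epsilon>"
  shows "\<exists>i j::int. 0 < real_of_int i * ln 2 + real_of_int j * ln 3 \<and> real_of_int i * ln 2 + real_of_int j * ln 3 < \<epsilon>"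
proof -
  have l2: "0 < ln (2::real)" and l3: "0 < ln (3::real)" by auto
  define N where "N = nat \<lceil>ln 2 / \<epsilon>\<rceil> + 1"
  have N: "N > 0" unfolding N_def by simp
  have NN: "ln 2 / \<epsilon> < real N" unfolding N_def by linarith
  obtain h k where hk: "0 < k" "k \<le> int N" "\<bar>of_int k * (ln 3 / ln 2) - of_int h\<bar> < 1 / real N"
    using Dirichlet_approx[OF N] by blast
  define d where "d = real_of_int (- h) * ln 2 + real_of_int k * ln 3"
  have dd: "d = ln 2 * (of_int k * (ln 3 / ln 2) - of_int h)" unfolding d_def using l2 by (simp add: field_simps)
  have "\<bar>d\<bar> < ln 2 / real N" unfolding dd abs_mult using hk(3) l2 N
    by (simp add: field_simps)
  also have "ln 2 / real N < \<epsilon>" using NN e N by (simp add: field_simps)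
  finally have dlt: "\<bar>d\<bar> < \<epsilon>" .
  have "d \<noteq> 0" using ln23_int[of "- h" k] hk(1) unfolding d_def by auto
  then consider "d > 0" | "d < 0" by linarith
  then show ?thesis
  proof cases
    case 1 then show ?thesis using dlt unfolding d_def by (intro exI[of _ "- h"] exI[of _ k]) auto
  next
    case 2 then show ?thesis using dlt unfolding d_def by (intro exI[of _ "h"] exI[of _ "- k"]) auto
  qed
qed


lemma shift_at_top: "filterlim (\<lambda>t::real. t + e) at_top at_top"
  using filterlim_tendsto_add_at_top[OF tendsto_const[of e] filterlim_ident] by (simp add: add.commute)

lemma P_shift:
  fixes h :: "real \<Rightarrow> real" and d e c :: real
  assumes "((\<lambda>t. h (t + d) - h t) \<longlongrightarrow> (c::real)) at_top"
  shows "((\<lambda>t. h (t + e + d) - h (t + e)) \<longlongrightarrow> c) at_top"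
  using filterlim_compose[OF assms shift_at_top[of e]] .

lemma P_add:
  fixes h :: "real \<Rightarrow> real"
  assumes 1: "((\<lambda>t. h (t + d1) - h t) \<longlongrightarrow> c1) at_top" and 2: "((\<lambda>t. h (t + d2) - h t) \<longlongrightarrow> c2) at_top"
  shows "((\<lambda>t. h (t + (d1 + d2)) - h t) \<longlongrightarrow> c1 + c2) at_top"
proof -
  have "((\<lambda>t. (h (t + d1 + d2) - h (t + d1)) + (h (t + d1) - h t)) \<longlongrightarrow> c2 + c1) at_top"
    by (intro tendsto_add P_shift[OF 2] 1)
  moreover have "(\<lambda>t. (h (t + d1 + d2) - h (t + d1)) + (h (t + d1) - h t)) = (\<lambda>t. h (t + (d1 + d2)) - h t)"
    by (rule ext) (simp add: add.assoc)
  ultimately show ?thesis by (simp add: add.commute)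
qed

lemma P_neg:
  fixes h :: "real \<Rightarrow> real"
  assumes 1: "((\<lambda>t. h (t + d) - h t) \<longlongrightarrow> c) at_top"
  shows "((\<lambda>t. h (t + - d) - h t) \<longlongrightarrow> - c) at_top"
proof -
  have "((\<lambda>t. - (h (t + - d + d) - h (t + - d))) \<longlongrightarrow> - c) at_top"
    by (intro tendsto_minus P_shift[OF 1])
  then show ?thesis by simp
qed

lemma P_nat:
  fixes h :: "real \<Rightarrow> real"
  assumes 1: "((\<lambda>t. h (t + d) - h t) \<longlongrightarrow> c) at_top"
  shows "((\<lambda>t. h (t + real n * d) - h t) \<longlongrightarrow> real n * c) at_top"
proof (induction n)
  case 0 then show ?case by simp
next
  case (Suc n)
  from P_add[OF Suc 1] show ?case by (simp add: algebra_simps)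
qed

lemma P_int:
  fixes h :: "real \<Rightarrow> real"
  assumes 1: "((\<lambda>t. h (t + d) - h t) \<longlongrightarrow> c) at_top"
  shows "((\<lambda>t. h (t + real_of_int i * d) - h t) \<longlongrightarrow> real_of_int i * c) at_top"
proof (cases "0 \<le> i")
  case True
  then have "i = int (nat i)" by simp
  then obtain n where "i = int n" by blast
  then show ?thesis using P_nat[OF 1, of n] by simp
next
  case False
  then have "i = - int (nat (- i))" by simp
  then obtain n where "i = - int n" by blast
  then show ?thesis using P_neg[OF P_nat[OF 1, of n]] by simp
qed

lemma RV_from_23:
  fixes g :: "real \<Rightarrow> real"
  assumes mono: "\<And>x y. x0 \<le> x \<Longrightarrow> x \<le> y \<Longrightarrow> g x \<le> g y"
    and pos: "\<And>x. x0 \<le> x \<Longrightarrow> 0 < g x"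
    and l2: "((\<lambda>n. g (2 * n) / g n) \<longlongrightarrow> L1) at_top"
    and l3: "((\<lambda>n. g (3 * n) / g n) \<longlongrightarrow> L2) at_top"
  shows "\<exists>\<kappa>\<ge>0. (\<forall>x>0. ((\<lambda>n. g (x * n) / g n) \<longlongrightarrow> x powr \<kappa>) at_top)"
proof -
  define x1 where "x1 = max x0 1"
  have x1: "x0 \<le> x1" "1 \<le> x1" "0 < x1" unfolding x1_def by auto
  define T0 where "T0 = ln x1"
  have eT: "x0 \<le> exp t" if "T0 \<le> t" for t
  proof -
    have "x1 = exp T0" unfolding T0_def using x1 by simp
    also have "\<dots> \<le> exp t" using that by simp
    finally show ?thesis using x1 by simp
  qed
  define h where "h t = ln (g (exp t))" for t
  have hmono: "h s \<le> h t" if "T0 \<le> s" "s \<le> t" for s t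
  proof -
    have a: "x0 \<le> exp s" by (rule eT[OF that(1)])
    have b: "exp s \<le> exp t" using that(2) by simp
    have "0 < g (exp s)" using pos[OF a] .
    moreover have "g (exp s) \<le> g (exp t)" using mono[OF a b] .
    ultimately show ?thesis unfolding h_def by simp
  qed
  have L1: "1 \<le> L1"
  proof (rule tendsto_lowerbound[OF l2])
    show "eventually (\<lambda>n. 1 \<le> g (2 * n) / g n) at_top"
    proof (rule eventually_at_top_linorderI[of x1])
      fix n assume "x1 \<le> n"
      then have a: "x0 \<le> n" and b: "0 \<le> n" using x1 by auto
      have "n \<le> 2 * n" using b by simp
      then have "g n \<le> g (2 * n)" by (rule mono[OF a])
      moreover have "0 < g n" by (rule pos[OF a])
      ultimately show "1 \<le> g (2 * n) / g n" by simp
    qed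
  qed simp
  have L2: "1 \<le> L2"
  proof (rule tendsto_lowerbound[OF l3])
    show "eventually (\<lambda>n. 1 \<le> g (3 * n) / g n) at_top"
    proof (rule eventually_at_top_linorderI[of x1])
      fix n assume "x1 \<le> n"
      then have a: "x0 \<le> n" and b: "0 \<le> n" using x1 by auto
      have "n \<le> 3 * n" using b by simp
      then have "g n \<le> g (3 * n)" by (rule mono[OF a])
      moreover have "0 < g n" by (rule pos[OF a])
      ultimately show "1 \<le> g (3 * n) / g n" by simp
    qed
  qed simp
  define p where "p = ln L1"
  define q where "q = ln L2"
  have base: "((\<lambda>t. h (t + ln c) - h t) \<longlongrightarrow> ln L) at_top"
    if c: "1 \<le> c" and lc: "((\<lambda>n. g (c * n) / g n) \<longlongrightarrow> L) at_top" and L: "1 \<le> L" for c L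
  proof -
    have "((\<lambda>t. ln (g (c * exp t) / g (exp t))) \<longlongrightarrow> ln L) at_top"
      using tendsto_ln[OF filterlim_compose[OF lc exp_at_top]] L by simp
    moreover have "eventually (\<lambda>t. ln (g (c * exp t) / g (exp t)) = h (t + ln c) - h t) at_top"
    proof (rule eventually_at_top_linorderI[of T0])
      fix t assume t: "T0 \<le> t"
      have e1: "x0 \<le> exp t" by (rule eT[OF t])
      moreover have "exp t \<le> c * exp t" using c by simp
      ultimately have e2: "x0 \<le> c * exp t" by linarith
      have "0 < g (exp t)" "0 < g (c * exp t)" using pos[OF e1] pos[OF e2] by auto
      moreover have "exp (t + ln c) = c * exp t" using c by (simp add: exp_add)
      ultimately show "ln (g (c * exp t) / g (exp t)) = h (t + ln c) - h t"
        unfolding h_def by (simp add: ln_div)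
    qed
    ultimately show ?thesis by (rule Lim_transform_eventually)
  qed
  have P2: "((\<lambda>t. h (t + ln 2) - h t) \<longlongrightarrow> p) at_top" unfolding p_def by (rule base[OF _ _ L1]) (use l2 in auto)
  have P3: "((\<lambda>t. h (t + ln 3) - h t) \<longlongrightarrow> q) at_top" unfolding q_def by (rule base[OF _ _ L2]) (use l3 in auto)
  have Pij: "((\<lambda>t. h (t + (real_of_int i * ln 2 + real_of_int j * ln 3)) - h t)
      \<longlongrightarrow> real_of_int i * p + real_of_int j * q) at_top" for i j
    by (rule P_add[OF P_int[OF P2] P_int[OF P3]])
  have Pmono: "0 \<le> c" if "((\<lambda>t. h (t + d) - h t) \<longlongrightarrow> c) at_top" "0 \<le> d" for d c
  proof (rule tendsto_lowerbound[OF that(1)])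
    show "eventually (\<lambda>t. 0 \<le> h (t + d) - h t) at_top"
    proof (rule eventually_at_top_linorderI[of T0])
      fix t assume t: "T0 \<le> t"
      have "t \<le> t + d" using that(2) by simp
      then have "h t \<le> h (t + d)" by (rule hmono[OF t])
      then show "0 \<le> h (t + d) - h t" by simp
    qed
  qed simp
  have lin: "q * ln 2 = p * ln 3"
  proof (rule Lin23)
    fix i j :: int
    assume "0 < real_of_int i * ln 2 + real_of_int j * ln 3"
    then have "0 \<le> real_of_int i * ln 2 + real_of_int j * ln 3" by simp
    then show "0 \<le> real_of_int i * p + real_of_int j * q" by (rule Pmono[OF Pij])
  qed
  define \<kappa> where "\<kappa> = p / ln 2"
  have p0: "0 \<le> p" unfolding p_def using L1 by simp
  have k0: "0 \<le> \<kappa>" unfolding \<kappa>_def using p0 by simp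
  have Pk: "((\<lambda>t. h (t + d) - h t) \<longlongrightarrow> \<kappa> * d) at_top" if "d = real_of_int i * ln 2 + real_of_int j * ln 3" for d i j
  proof -
    have "q = \<kappa> * ln 3" unfolding \<kappa>_def using lin by (simp add: field_simps)
    then have "real_of_int i * p + real_of_int j * q = \<kappa> * d"
      unfolding that \<kappa>_def by (simp add: field_simps)
    then show ?thesis using Pij[of i j] that by simp
  qed
  have Ps: "((\<lambda>t. h (t + s) - h t) \<longlongrightarrow> \<kappa> * s) at_top" for s
  proof (rule tendstoI)
    fix \<epsilon> :: real assume \<epsilon>: "0 < \<epsilon>"
    define \<delta> where "\<delta> = \<epsilon> / (2 * (\<kappa> + 1))"
    have k1: "0 < \<kappa> + 1" using k0 by simp
    have \<delta>: "0 < \<delta>" unfolding \<delta>_def using \<epsilon> k1 by simp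
    have "\<kappa> * \<delta> = (\<epsilon> / 2) * (\<kappa> / (\<kappa> + 1))" unfolding \<delta>_def by simp
    also have "\<dots> < (\<epsilon> / 2) * 1" using \<epsilon> k1 by (intro mult_strict_left_mono) auto
    finally have \<delta>': "\<kappa> * \<delta> < \<epsilon> / 2" by simp
    note \<delta> = \<delta> \<delta>'
    obtain i j :: int where ij: "0 < real_of_int i * ln 2 + real_of_int j * ln 3"
      "real_of_int i * ln 2 + real_of_int j * ln 3 < \<delta>" using small23[OF \<delta>(1)] by blast
    define e where "e = real_of_int i * ln 2 + real_of_int j * ln 3"
    have e: "0 < e" "e < \<delta>" using ij unfolding e_def by auto
    define m where "m = \<lfloor>s / e\<rfloor>"
    define d1 where "d1 = real_of_int m * e"
    define d2 where "d2 = real_of_int (m + 1) * e"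
    have d1s: "d1 \<le> s"
    proof -
      have "real_of_int m \<le> s / e" unfolding m_def by simp
      then show ?thesis unfolding d1_def using e by (simp add: field_simps)
    qed
    have sd2: "s \<le> d2"
    proof -
      have "s / e \<le> real_of_int (m + 1)" unfolding m_def by linarith
      then show ?thesis unfolding d2_def using e by (simp add: field_simps)
    qed
    have kd: "\<kappa> * d2 - \<kappa> * d1 < \<epsilon> / 2"
    proof -
      have "\<kappa> * d2 - \<kappa> * d1 = \<kappa> * e" unfolding d1_def d2_def by (simp add: algebra_simps)
      also have "\<dots> \<le> \<kappa> * \<delta>" using e k0 by (intro mult_left_mono) auto
      finally show ?thesis using \<delta> by simp
    qed
    have T1: "((\<lambda>t. h (t + d1) - h t) \<longlongrightarrow> \<kappa> * d1) at_top"
      by (rule Pk[of _ "m * i" "m * j"]) (simp add: d1_def e_def algebra_simps)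
    have T2: "((\<lambda>t. h (t + d2) - h t) \<longlongrightarrow> \<kappa> * d2) at_top"
      by (rule Pk[of _ "(m + 1) * i" "(m + 1) * j"]) (simp add: d2_def e_def algebra_simps)
    have e2: "0 < \<epsilon> / 2" using \<epsilon> by simp
    have ev1: "eventually (\<lambda>t. dist (h (t + d1) - h t) (\<kappa> * d1) < \<epsilon> / 2) at_top"
      by (rule tendstoD[OF T1 e2])
    have ev2: "eventually (\<lambda>t. dist (h (t + d2) - h t) (\<kappa> * d2) < \<epsilon> / 2) at_top"
      by (rule tendstoD[OF T2 e2])
    have ev3: "eventually (\<lambda>t. T0 - d1 \<le> t) at_top" by simp
    show "eventually (\<lambda>t. dist (h (t + s) - h t) (\<kappa> * s) < \<epsilon>) at_top"
      using ev1 ev2 ev3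
    proof eventually_elim
      case (elim t)
      have m1: "h (t + d1) \<le> h (t + s)" using elim(3) d1s by (intro hmono) auto
      have m2: "h (t + s) \<le> h (t + d2)" using elim(3) d1s sd2 by (intro hmono) auto
      have "\<kappa> * d1 \<le> \<kappa> * s" "\<kappa> * s \<le> \<kappa> * d2" using d1s sd2 k0 by (auto intro: mult_left_mono)
      then show ?case using elim(1,2) m1 m2 kd unfolding dist_real_def abs_less_iff by linarith
    qed
  qed
  have "\<forall>x>0. ((\<lambda>n. g (x * n) / g n) \<longlongrightarrow> x powr \<kappa>) at_top"
  proof (intro allI impI)
    fix x :: real assume x: "0 < x"
    have "((\<lambda>n. exp (h (ln n + ln x) - h (ln n))) \<longlongrightarrow> exp (\<kappa> * ln x)) at_top"
      by (intro tendsto_exp filterlim_compose[OF Ps[of "ln x"] ln_at_top])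
    moreover have "eventually (\<lambda>n. exp (h (ln n + ln x) - h (ln n)) = g (x * n) / g n) at_top"
    proof (rule eventually_at_top_linorderI[of "x1 + x1 / x"])
      fix n assume n: "x1 + x1 / x \<le> n"
      have xp: "0 < x1 / x" using x x1 by simp
      have "x1 \<le> n" using n xp by linarith
      then have n0: "0 < n" using x1 by linarith
      have gn: "0 < g n" using pos \<open>x1 \<le> n\<close> x1 by auto
      have "x1 / x \<le> n" using n x1 by linarith
      then have "x1 \<le> x * n" using x by (simp add: field_simps)
      then have gxn: "0 < g (x * n)" using pos x1 by auto
      have "exp (ln n + ln x) = x * n" using n0 x by (simp add: exp_add)
      then show "exp (h (ln n + ln x) - h (ln n)) = g (x * n) / g n"
        unfolding h_def using n0 gn gxn by (simp add: exp_diff)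
    qed
    ultimately have "((\<lambda>n. g (x * n) / g n) \<longlongrightarrow> exp (\<kappa> * ln x)) at_top"
      by (rule Lim_transform_eventually)
    moreover have "x powr \<kappa> = exp (\<kappa> * ln x)" using x by (simp add: powr_def)
    ultimately show "((\<lambda>n. g (x * n) / g n) \<longlongrightarrow> x powr \<kappa>) at_top" by simp
  qed
  then show ?thesis using k0 by blast
qed


lemma RV_dec:
  fixes g :: "real \<Rightarrow> real"
  assumes anti: "\<And>x y. x0 \<le> x \<Longrightarrow> x \<le> y \<Longrightarrow> g y \<le> g x"
    and lb: "\<And>x. x0 \<le> x \<Longrightarrow> c0 \<le> g x" and c0: "0 < c0"
  shows "regularly_varying g 0"
proof -
  define L where "L = Inf (g ` {x0..})"
  have ne: "g ` {x0..} \<noteq> {}" by auto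
  have bdd: "bdd_below (g ` {x0..})" using lb by (auto intro!: bdd_belowI[of _ c0])
  have Lle: "L \<le> g x" if "x0 \<le> x" for x unfolding L_def using bdd that by (auto intro!: cInf_lower)
  have Lc: "c0 \<le> L" unfolding L_def using ne lb by (auto intro!: cInf_greatest)
  have lim: "(g \<longlongrightarrow> L) at_top"
  proof (rule order_tendstoI)
    fix a assume "a < L"
    show "eventually (\<lambda>x. a < g x) at_top"
      by (rule eventually_at_top_linorderI[of x0]) (use Lle \<open>a < L\<close> in force)
  next
    fix a assume "L < a"
    then obtain v where v: "v \<in> g ` {x0..}" "v < a" unfolding L_def using cInf_less_iff[OF ne bdd] by blast
    then obtain x1 where x1: "x0 \<le> x1" "g x1 < a" by auto
    show "eventually (\<lambda>x. g x < a) at_top"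
    proof (rule eventually_at_top_linorderI[of x1])
      fix x assume "x1 \<le> x"
      then have "g x \<le> g x1" by (rule anti[OF x1(1)])
      then show "g x < a" using x1(2) by simp
    qed
  qed
  show ?thesis unfolding regularly_varying_def
  proof (intro allI impI)
    fix x :: real assume x: "0 < x"
    have "filterlim (\<lambda>n. x * n) at_top at_top"
      by (rule filterlim_tendsto_pos_mult_at_top[OF tendsto_const x filterlim_ident])
    then have "((\<lambda>n. g (x * n)) \<longlongrightarrow> L) at_top" by (rule filterlim_compose[OF lim])
    then have "((\<lambda>n. g (x * n) / g n) \<longlongrightarrow> L / L) at_top"
      using Lc c0 by (intro tendsto_divide lim) auto
    then show "((\<lambda>n. g (x * n) / g n) \<longlongrightarrow> x powr 0) at_top" using Lc c0 x by simp
  qed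
qed

lemma real_le_pow2: "real (k::nat) \<le> 2 ^ k"
proof (induction k)
  case 0 then show ?case by simp
next
  case (Suc k)
  have a: "1 \<le> (2::real) ^ k" by simp
  have b: "real (Suc k) = real k + 1" by simp
  have c: "(2::real) ^ Suc k = 2 ^ k + 2 ^ k" by simp
  show ?case unfolding b c using Suc.IH a by linarith
qed

lemma kappa_le1:
  fixes g :: "real \<Rightarrow> real"
  assumes lin: "((\<lambda>y. g y / y) \<longlongrightarrow> 0) at_top"
    and pos: "\<And>x. x0 \<le> x \<Longrightarrow> 0 < g x"
    and l2: "((\<lambda>n. g (2 * n) / g n) \<longlongrightarrow> 2 powr \<kappa>) at_top"
  shows "\<kappa> \<le> 1"
proof (rule ccontr)
  assume "\<not> \<kappa> \<le> 1"
  then have "2 powr 1 < 2 powr \<kappa>" by (intro powr_less_mono) auto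
  then have k2: "2 < 2 powr \<kappa>" by simp
  define c where "c = (2 + 2 powr \<kappa>) / 2"
  have c: "2 < c" "c < 2 powr \<kappa>" unfolding c_def using k2 by auto
  have "eventually (\<lambda>n. c < g (2 * n) / g n) at_top" by (rule order_tendstoD(1)[OF l2 c(2)])
  then obtain N where N: "\<And>n. N \<le> n \<Longrightarrow> c < g (2 * n) / g n" by (auto simp: eventually_at_top_linorder)
  define N' where "N' = max N (max x0 1)"
  have N': "N \<le> N'" "x0 \<le> N'" "1 \<le> N'" unfolding N'_def by auto
  have pw: "1 \<le> (2::real) ^ k" for k :: nat by simp
  have grow: "c ^ k * g N' \<le> g (2 ^ k * N')" for k :: nat
  proof (induction k)
    case 0 then show ?case by simp
  next
    case (Suc k)
    have ge: "N' \<le> 2 ^ k * N'" using pw[of k] N' by (simp add: mult_le_cancel_right1)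
    then have "x0 \<le> 2 ^ k * N'" using N' by linarith
    then have gp: "0 < g (2 ^ k * N')" by (rule pos)
    have "N \<le> 2 ^ k * N'" using ge N' by linarith
    then have "c < g (2 * (2 ^ k * N')) / g (2 ^ k * N')" by (rule N)
    then have "c * g (2 ^ k * N') < g (2 * (2 ^ k * N'))" using gp by (simp add: field_simps)
    moreover have "c * (c ^ k * g N') \<le> c * g (2 ^ k * N')" using Suc c by (intro mult_left_mono) auto
    ultimately show ?case by (simp add: mult.assoc)
  qed
  have gN: "0 < g N'" using pos N' by auto
  define \<delta> where "\<delta> = g N' / N'"
  have \<delta>: "0 < \<delta>" unfolding \<delta>_def using gN N' by simp
  have low: "\<delta> \<le> g (2 ^ k * N') / (2 ^ k * N')" for k :: nat
  proof -
    have "1 \<le> (c / 2) ^ k" using c by simp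
    moreover have "0 \<le> g N' / N'" using gN N' by simp
    ultimately have "1 * (g N' / N') \<le> (c / 2) ^ k * (g N' / N')" by (rule mult_right_mono)
    then have "g N' / N' \<le> (c / 2) ^ k * (g N' / N')" by simp
    also have "\<dots> = (c ^ k * g N') / (2 ^ k * N')" by (simp add: power_divide)
    also have "\<dots> \<le> g (2 ^ k * N') / (2 ^ k * N')" using grow[of k] N' by (intro divide_right_mono) auto
    finally show ?thesis unfolding \<delta>_def .
  qed
  have "eventually (\<lambda>y. g y / y < \<delta>) at_top" by (rule order_tendstoD(2)[OF lin \<delta>])
  then obtain Y where Y: "\<And>y. Y \<le> y \<Longrightarrow> g y / y < \<delta>" by (auto simp: eventually_at_top_linorder)
  define k where "k = nat \<lceil>Y\<rceil>"
  have "Y \<le> real k" unfolding k_def by linarith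
  also have "real k \<le> 2 ^ k" by (rule real_le_pow2)
  also have "(2::real) ^ k \<le> 2 ^ k * N'" using N' by simp
  finally have "g (2 ^ k * N') / (2 ^ k * N') < \<delta>" by (rule Y)
  with low[of k] show False by simp
qed


locale gsetting =
  fixes g :: "real \<Rightarrow> real" and r :: "real \<Rightarrow> real \<Rightarrow> real"
  assumes g0: "g 0 = 0"
    and req: "\<And>z n. 0 \<le> n \<Longrightarrow> r z n = (g (\<bar>z + 1\<bar> * n) + g (\<bar>z - 1\<bar> * n) - 2 * g (\<bar>z\<bar> * n)) / (2 * g n)"
    and lin: "((\<lambda>y. g y / y) \<longlongrightarrow> 0) at_top"
    and half: "\<And>k::nat. 1/8 \<le> g (real k + 1/2)"
begin

lemma part1:
  assumes a: "a \<in> {0..1}" and rv: "regularly_varying g a"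
  shows "\<forall>z. (r z \<longlongrightarrow> cov_target a z) at_top" and "(r 1 \<longlongrightarrow> 2 powr (a - 1) - 1) at_top"
proof -
  have a0: "0 \<le> a" using a by simp
  show z: "\<forall>z. (r z \<longlongrightarrow> cov_target a z) at_top"
    using AN1[OF g0 rv a0 req] by blast
  show "(r 1 \<longlongrightarrow> 2 powr (a - 1) - 1) at_top"
    using z target_one[OF a0] by metis
qed

lemma r1: "0 \<le> n \<Longrightarrow> r 1 n = (g (2 * n) - 2 * g n) / (2 * g n)"
  using req[of n 1] g0 by simp

lemma r2: "0 \<le> n \<Longrightarrow> r 2 n = (g (3 * n) + g n - 2 * g (2 * n)) / (2 * g n)"
  using req[of n 2] by simp

lemma iii_i:
  assumes mc: "(\<exists>x0. \<forall>x y. x0 \<le> x \<longrightarrow> x \<le> y \<longrightarrow> g x \<le> g y) \<or> (\<exists>x0. \<forall>x y. x0 \<le> x \<longrightarrow> x \<le> y \<longrightarrow> g y \<le> g x)"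
    and c1: "(r 1 \<longlongrightarrow> c1) at_top" and c2: "(r 2 \<longlongrightarrow> c2) at_top"
  shows "\<exists>a\<in>{0..1}. regularly_varying g a"
  using mc
proof
  assume "\<exists>x0. \<forall>x y. x0 \<le> x \<longrightarrow> x \<le> y \<longrightarrow> g y \<le> g x"
  then obtain x0 where anti: "\<And>x y. x0 \<le> x \<Longrightarrow> x \<le> y \<Longrightarrow> g y \<le> g x" by blast
  define x1 where "x1 = max x0 0"
  have lb: "1/8 \<le> g x" if "x1 \<le> x" for x
  proof -
    define k where "k = nat \<lceil>x\<rceil>"
    have "x \<le> real k + 1/2" unfolding k_def by linarith
    moreover have "x0 \<le> x" using that unfolding x1_def by simp
    ultimately have "g (real k + 1/2) \<le> g x" by (intro anti) auto
    then show ?thesis using half[of k] by simp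
  qed
  have "regularly_varying g 0"
  proof (rule RV_dec[of x1 g "1/8"])
    show "\<And>x y. x1 \<le> x \<Longrightarrow> x \<le> y \<Longrightarrow> g y \<le> g x" using anti unfolding x1_def by auto
    show "\<And>x. x1 \<le> x \<Longrightarrow> 1/8 \<le> g x" by (rule lb)
  qed simp
  then show ?thesis by auto
next
  assume "\<exists>x0. \<forall>x y. x0 \<le> x \<longrightarrow> x \<le> y \<longrightarrow> g x \<le> g y"
  then obtain x0 where mono: "\<And>x y. x0 \<le> x \<Longrightarrow> x \<le> y \<Longrightarrow> g x \<le> g y" by blast
  define x2 where "x2 = max x0 0 + 2"
  have lb: "1/8 \<le> g x" if "x2 \<le> x" for x
  proof -
    define k where "k = nat \<lceil>max x0 0\<rceil>"
    have k1: "x0 \<le> real k + 1/2" unfolding k_def by linarith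
    have k2: "real k + 1/2 \<le> x" using that unfolding k_def x2_def by linarith
    have "g (real k + 1/2) \<le> g x" by (rule mono[OF k1 k2])
    then show ?thesis using half[of k] by simp
  qed
  have x2: "x0 \<le> x2" "0 < x2" unfolding x2_def by auto
  have pos: "0 < g x" if "x2 \<le> x" for x using lb[OF that] by simp
  have mono2: "\<And>x y. x2 \<le> x \<Longrightarrow> x \<le> y \<Longrightarrow> g x \<le> g y" using mono x2 by auto
  have ev2: "eventually (\<lambda>n. 2 * r 1 n + 2 = g (2 * n) / g n) at_top"
  proof (rule eventually_at_top_linorderI[of x2])
    fix n assume n: "x2 \<le> n"
    then have "0 \<le> n" using x2 by simp
    have gn: "0 < g n" by (rule pos[OF n])
    show "2 * r 1 n + 2 = g (2 * n) / g n" unfolding r1[OF \<open>0 \<le> n\<close>] using gn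
      by (simp add: field_simps)
  qed
  have l2: "((\<lambda>n. g (2 * n) / g n) \<longlongrightarrow> 2 * c1 + 2) at_top"
    by (rule Lim_transform_eventually[OF _ ev2]) (intro tendsto_intros c1)
  have ev3: "eventually (\<lambda>n. 2 * r 2 n - 1 + 2 * (g (2 * n) / g n) = g (3 * n) / g n) at_top"
  proof (rule eventually_at_top_linorderI[of x2])
    fix n assume n: "x2 \<le> n"
    then have "0 \<le> n" using x2 by simp
    have gn: "0 < g n" by (rule pos[OF n])
    show "2 * r 2 n - 1 + 2 * (g (2 * n) / g n) = g (3 * n) / g n" unfolding r2[OF \<open>0 \<le> n\<close>] using gn
      by (simp add: field_simps)
  qed
  have l3: "((\<lambda>n. g (3 * n) / g n) \<longlongrightarrow> 2 * c2 - 1 + 2 * (2 * c1 + 2)) at_top"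
    by (rule Lim_transform_eventually[OF _ ev3]) (intro tendsto_intros c2 l2)
  obtain \<kappa> where k: "0 \<le> \<kappa>" "\<forall>x>0. ((\<lambda>n. g (x * n) / g n) \<longlongrightarrow> x powr \<kappa>) at_top"
    using RV_from_23[OF mono2 pos l2 l3] by blast
  have "\<kappa> \<le> 1"
  proof (rule kappa_le1[OF lin pos])
    show "((\<lambda>n. g (2 * n) / g n) \<longlongrightarrow> 2 powr \<kappa>) at_top" using k(2) by simp
  qed
  moreover have "regularly_varying g \<kappa>" unfolding regularly_varying_def using k(2) by blast
  ultimately show ?thesis using k(1) by auto
qed

lemma part2:
  assumes mc: "(\<exists>x0. \<forall>x y. x0 \<le> x \<longrightarrow> x \<le> y \<longrightarrow> g x \<le> g y) \<or> (\<exists>x0. \<forall>x y. x0 \<le> x \<longrightarrow> x \<le> y \<longrightarrow> g y \<le> g x)"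
  shows "(\<forall>a\<in>{0..1}. regularly_varying g a \<longleftrightarrow> (\<forall>z. (r z \<longlongrightarrow> cov_target a z) at_top))
     \<and> ((\<exists>c1 c2. (r 1 \<longlongrightarrow> c1) at_top \<and> (r 2 \<longlongrightarrow> c2) at_top) \<longleftrightarrow> (\<exists>a\<in>{0..1}. regularly_varying g a))"
proof (intro conjI ballI iffI)
  fix a :: real assume a: "a \<in> {0..1}"
  { assume "regularly_varying g a"
    then show "\<forall>z. (r z \<longlongrightarrow> cov_target a z) at_top" using part1[OF a] by blast }
  { assume all: "\<forall>z. (r z \<longlongrightarrow> cov_target a z) at_top"
    obtain b where b: "b \<in> {0..1}" "regularly_varying g b"
      using iii_i[OF mc, of "cov_target a 1" "cov_target a 2"] all by blast
    have "(r 1 \<longlongrightarrow> 2 powr (b - 1) - 1) at_top" using part1(2)[OF b] .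
    moreover have "(r 1 \<longlongrightarrow> 2 powr (a - 1) - 1) at_top"
    proof -
      have "(r 1 \<longlongrightarrow> cov_target a 1) at_top" using all by blast
      moreover have "cov_target a 1 = 2 powr (a - 1) - 1" using target_one[of a] a by simp
      ultimately show ?thesis by simp
    qed
    ultimately have "2 powr (b - 1) - 1 = 2 powr (a - 1) - 1"
      by (rule tendsto_unique[OF trivial_limit_at_top_linorder])
    then have "2 powr (b - 1) = 2 powr (a - 1)" by simp
    then have "b - 1 = a - 1" by (subst (asm) powr_inj) auto
    then show "regularly_varying g a" using b by simp }
next
  assume "\<exists>c1 c2. (r 1 \<longlongrightarrow> c1) at_top \<and> (r 2 \<longlongrightarrow> c2) at_top"
  then obtain c1 c2 where "(r 1 \<longlongrightarrow> c1) at_top" "(r 2 \<longlongrightarrow> c2) at_top" by blast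
  then show "\<exists>a\<in>{0..1}. regularly_varying g a" by (rule iii_i[OF mc])
next
  assume "\<exists>a\<in>{0..1}. regularly_varying g a"
  then obtain a where a: "a \<in> {0..1}" "regularly_varying g a" by blast
  then show "\<exists>c1 c2. (r 1 \<longlongrightarrow> c1) at_top \<and> (r 2 \<longlongrightarrow> c2) at_top" using part1(1)[OF a] by blast
qed

end


context PPs begin

lemma Gb0: "Gb Bp Bn 0 = 0" unfolding Gb_def by simp

lemma Gb_mono:
  assumes F: "\<And>x. x0 \<le> x \<Longrightarrow> Fb Bp Bn x \<le> 0" and x: "max x0 0 \<le> x" and xy: "x \<le> y"
  shows "Gb Bp Bn x \<le> Gb Bp Bn y"
proof -
  have x0: "0 \<le> x" using x by simp
  have "integral {x..y} (Fb Bp Bn) \<le> integral {x..y} (\<lambda>_. 0::real)"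
    by (rule integral_le) (use Fb_integrable[OF x0 xy] F x in auto)
  then show ?thesis using G_diff[OF x0 xy] by simp
qed

lemma Gb_anti:
  assumes F: "\<And>x. x0 \<le> x \<Longrightarrow> 0 \<le> Fb Bp Bn x" and x: "max x0 0 \<le> x" and xy: "x \<le> y"
  shows "Gb Bp Bn y \<le> Gb Bp Bn x"
proof -
  have x0: "0 \<le> x" using x by simp
  have "integral {x..y} (\<lambda>_. 0::real) \<le> integral {x..y} (Fb Bp Bn)"
    by (rule integral_le) (use Fb_integrable[OF x0 xy] F x in auto)
  then show ?thesis using G_diff[OF x0 xy] by simp
qed

lemma gset:
  assumes hu: "hyperuniform M X"
  shows "gsetting (Gb Bp Bn) (cov_ratio M X)"
proof
  show "Gb Bp Bn 0 = 0" by (rule Gb0)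
  fix z n :: real assume n: "0 \<le> n"
  have e1: "\<bar>n * z + n\<bar> = \<bar>z + 1\<bar> * n"
  proof -
    have "n * z + n = n * (z + 1)" by (simp add: algebra_simps)
    then show ?thesis using n by (simp add: abs_mult)
  qed
  have e2: "\<bar>n * z - n\<bar> = \<bar>z - 1\<bar> * n"
  proof -
    have "n * z - n = n * (z - 1)" by (simp add: algebra_simps)
    then show ?thesis using n by (simp add: abs_mult)
  qed
  have e3: "\<bar>n * z\<bar> = \<bar>z\<bar> * n" using n by (simp add: abs_mult)
  show "cov_ratio M X z n = (Gb Bp Bn (\<bar>z + 1\<bar> * n) + Gb Bp Bn (\<bar>z - 1\<bar> * n) - 2 * Gb Bp Bn (\<bar>z\<bar> * n)) / (2 * Gb Bp Bn n)"
    unfolding cov_ratio_def cov_G[OF hu n] var_G[OF hu n] e1 e2 e3 ..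
next
  have ev: "eventually (\<lambda>y. (var_cnt M X (Lam y 0) / y) / 2 = Gb Bp Bn y / y) at_top"
    by (rule eventually_at_top_linorderI[of 0]) (simp add: var_G[OF hu])
  have "((\<lambda>y. (var_cnt M X (Lam y 0) / y) / 2) \<longlongrightarrow> 0 / 2) at_top"
    using hu unfolding hyperuniform_def by (intro tendsto_divide tendsto_const) auto
  then show "((\<lambda>y. Gb Bp Bn y / y) \<longlongrightarrow> 0) at_top"
    using Lim_transform_eventually[OF _ ev] by simp
next
  fix k :: nat
  show "1/8 \<le> Gb Bp Bn (real k + 1/2)" by (rule G_half[OF hu])
qed

end

theorem theorem2:
  fixes M :: "'w measure" and X :: "'w \<Rightarrow> real set"
    and A Bp Bn :: "real measure"
  assumes pp: "point_process M X"
    and stat: "stationary_pp M X"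
    and unit: "unit_intensity M X"
    and red: "reduced_second_moment M X A"
    and beta: "finite_tpc_decomp A Bp Bn"
    and hu: "hyperuniform M X"
  shows "(\<forall>y>0. Gb Bp Bn y = var_cnt M X (Lam y 0) / 2)
    \<and> (\<forall>a\<in>{0..1}. regularly_varying (Gb Bp Bn) a \<longrightarrow>
          (\<forall>z. (cov_ratio M X z \<longlongrightarrow> cov_target a z) at_top)
          \<and> (cov_ratio M X 1 \<longlongrightarrow> 2 powr (a - 1) - 1) at_top)
    \<and> (((\<forall>\<^sub>F x in at_top. Fb Bp Bn x \<le> 0) \<or> (\<forall>\<^sub>F x in at_top. Fb Bp Bn x \<ge> 0)) \<longrightarrow>
          (\<forall>a\<in>{0..1}. regularly_varying (Gb Bp Bn) a \<longleftrightarrow>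
             (\<forall>z. (cov_ratio M X z \<longlongrightarrow> cov_target a z) at_top))
          \<and> ((\<exists>c1 c2. (cov_ratio M X 1 \<longlongrightarrow> c1) at_top \<and> (cov_ratio M X 2 \<longlongrightarrow> c2) at_top)
               \<longleftrightarrow> (\<exists>a\<in>{0..1}. regularly_varying (Gb Bp Bn) a)))"
proof -
  interpret PPs M X A Bp Bn by unfold_locales (rule pp unit red beta)+
  interpret G: gsetting "Gb Bp Bn" "cov_ratio M X" by (rule gset[OF hu])
  have c1: "\<forall>y>0. Gb Bp Bn y = var_cnt M X (Lam y 0) / 2"
    using var_G[OF hu] by simp
  have c2: "\<forall>a\<in>{0..1}. regularly_varying (Gb Bp Bn) a \<longrightarrow>
          (\<forall>z. (cov_ratio M X z \<longlongrightarrow> cov_target a z) at_top)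
          \<and> (cov_ratio M X 1 \<longlongrightarrow> 2 powr (a - 1) - 1) at_top"
    using G.part1 by blast
  have c3: "(\<forall>a\<in>{0..1}. regularly_varying (Gb Bp Bn) a \<longleftrightarrow>
             (\<forall>z. (cov_ratio M X z \<longlongrightarrow> cov_target a z) at_top))
          \<and> ((\<exists>c1 c2. (cov_ratio M X 1 \<longlongrightarrow> c1) at_top \<and> (cov_ratio M X 2 \<longlongrightarrow> c2) at_top)
               \<longleftrightarrow> (\<exists>a\<in>{0..1}. regularly_varying (Gb Bp Bn) a))"
    if sgn: "(\<forall>\<^sub>F x in at_top. Fb Bp Bn x \<le> 0) \<or> (\<forall>\<^sub>F x in at_top. Fb Bp Bn x \<ge> 0)"
  proof (rule G.part2)
    from sgn show "(\<exists>x0. \<forall>x y. x0 \<le> x \<longrightarrow> x \<le> y \<longrightarrow> Gb Bp Bn x \<le> Gb Bp Bn y)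
      \<or> (\<exists>x0. \<forall>x y. x0 \<le> x \<longrightarrow> x \<le> y \<longrightarrow> Gb Bp Bn y \<le> Gb Bp Bn x)"
    proof
      assume "\<forall>\<^sub>F x in at_top. Fb Bp Bn x \<le> 0"
      then obtain x0 where F: "\<And>x. x0 \<le> x \<Longrightarrow> Fb Bp Bn x \<le> 0" by (auto simp: eventually_at_top_linorder)
      have "\<forall>x y. max x0 0 \<le> x \<longrightarrow> x \<le> y \<longrightarrow> Gb Bp Bn x \<le> Gb Bp Bn y"
        using Gb_mono[OF F] by blast
      then show ?thesis by blast
    next
      assume "\<forall>\<^sub>F x in at_top. Fb Bp Bn x \<ge> 0"
      then obtain x0 where F: "\<And>x. x0 \<le> x \<Longrightarrow> 0 \<le> Fb Bp Bn x" by (auto simp: eventually_at_top_linorder)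
      have "\<forall>x y. max x0 0 \<le> x \<longrightarrow> x \<le> y \<longrightarrow> Gb Bp Bn y \<le> Gb Bp Bn x"
        using Gb_anti[OF F] by blast
      then show ?thesis by blast
    qed
  qed
  show ?thesis using c1 c2 c3 by blast
qed


end
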